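(* In the setting of the context, \[ \sum_{n=0}^\infty\big[\mathrm T^n\boldsymbol v\big]_{\boldsymbol 0}=\sum_{r\in C}\pi_r\int_{(-1,1)}\log\|B_r\psi(x)\|_1\,d\eta^C_r(x), \] where $\psi(x)=\frac12(1+x,\,1-x)^\top$ and $\|\cdot\|_1$ is the $\ell^1$ norm.
   Context: Setting (construction of the paper): $X$ finite, $P$ irreducible row-stochastic, $\Sigma=\{x\in X^{\mathbb N_0}:P_{x_nx_{n+1}}>0\}$, $\{A_i\}_{i\in X}\subset\mathrm{GL}_2(\mathbb R)$ projectively uniformly hyperbolic w.r.t. $\Sigma$ (continuous invariant splitting $\mathbb R^2=E^d\oplus E^w$ into lines over $\widehat\Sigma=\{(x_n)_{n\in\mathbb Z}:P_{x_nx_{n+1}}>0\}$, $A_{x_0}E^*(\hat x)=E^*(\widehat\sigma\hat x)$, with $\|A_{x_{n-1}}\cdots A_{x_0}|_{E^w}\|<\|A_{x_{n-1}}\cdots A_{x_0}|_{E^d}\|$ for some $n$). A multicone $\{M_i\}$ is fixed (non-empty proper finite unions of open intervals in $\mathbb{RP}^1$, $\overline{[A_j](M_i)}\subset M_j$ when $P_{ij}>0$), components $M_{i,a}$; $\beta(i,a,j)$ the unique $b$ with $[A_j](\overline{M_{i,a}})\subset M_{j,b}$; $R=\{((i,a),(j,b)):P_{ij}>0,\ b=\beta(i,a,j)\}$, $s(r)=(i,a)$, $t(r)=(j,b)$, $\tau(r)=j$; $Q_{r,r'}=P_{\tau(r)\tau(r')}$ if $t(r)=s(r')$ else $0$; $C$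 a fixed recurrent class. $L_{i,a}$ maps the projective non-negative cone onto $\overline{M_{i,a}}$; $B_r=\pm L_{t(r)}^{-1}A_{\tau(r)}L_{s(r)}$ entrywise positive. If the period of $Q|_C$ is $d>1$, $C,Q,B$ are replaced by the $d$-step system on words through the cyclic classes ($Q_{c,c'}=Q_{c_{d-1}c'_0}Q_{c'_0c'_1}\cdots Q_{c'_{d-2}c'_{d-1}}$, $B_c=B_{c_{d-1}}\cdots B_{c_0}$), keeping names; $\pi$ is the stationary vector of the resulting irreducible aperiodic $Q|_C$. Möbius data: for $B_r=\begin{pmatrix}a_r&b_r\\c_r&d_r\end{pmatrix}$, $\alpha_r=\frac12(a_r-b_r-c_r+d_r)$, $\beta_r=\frac12(a_r+b_r-c_r-d_r)$, $\gamma_r=\frac12(a_r-b_r+c_r-d_r)$, $\delta_r=\frac12(a_r+b_r+c_r+d_r)$; $f_r(x)=\frac{\alpha_rx+\beta_r}{\gamma_rx+\delta_r}$, $f_r^\top(0)=\gamma_r/\delta_r$, $\ell_r(x)=\mathrm{Log}(\gamma_rx+\delta_r)$. Operators: $b^{(r)}_{k,0}=0$, $b^{(r)}_{0,n}=(f_r^\top(0))^n$ ($n\ge1$), $b^{(r)}_{k,n}=\sum_{\ell=1}^{\min\{k,n\}}\binom n\ell\binom{k-1}{\ell-1}(f_r^\top(0))^{n-\ell}(-f_r(0))^{k-\ell}(f_r'(0))^\ell$ ($k,n\ge1$); $v(x;c)\in\ell^\infty(\mathbb N_0)$ has entry $c$ at $0$ and $-(-x)^n/n$ at $n\ge1$ ($|x|\le1$,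 $c\in\mathbb C$); $V$ the span of such vectors; $(T_ru)_k=\sum_nb^{(r)}_{k,n}u_n$ on $V$; on $V_C=\bigoplus_{r\in C}V$, $(\mathrm T\boldsymbol u)_{r'}=\sum_r\frac{\pi_rQ_{r,r'}}{\pi_{r'}}T_ru_r$; seed $\boldsymbol v_s=\sum_r\frac{\pi_rQ_{r,s}}{\pi_s}v(f_r(0);\ell_r(0))$; $[\boldsymbol w]_{\boldsymbol 0}=\sum_r\pi_r(w_r)_0$. Measures: $d_{\mathrm{hyp}}(x,y)=2|\mathrm{artanh}\,x-\mathrm{artanh}\,y|$; $\mathscr P_1(-1,1)$ = Borel probability measures on $(-1,1)$ with finite first $d_{\mathrm{hyp}}$-moment, Wasserstein-1 metric $W_1$ for $d_{\mathrm{hyp}}$; $\mathscr P_1^C=\prod_r\mathscr P_1(-1,1)$ with $\mathcal W(\eta,\zeta)=\sum_r\pi_rW_1(\eta_r,\zeta_r)$; $\eta^C$ is the unique fixed point in $\mathscr P_1^C$ of $(\mathscr H\eta)_{r'}=\sum_r\frac{\pi_rQ_{r,r'}}{\pi_{r'}}(f_r)_*\eta_r$. *)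

theory Defs
  imports "HOL-Probability.Probability"
begin

fun qpow :: "'r set \<Rightarrow> ('r \<Rightarrow> 'r \<Rightarrow> real) \<Rightarrow> nat \<Rightarrow> 'r \<Rightarrow> 'r \<Rightarrow> real" where
  "qpow C Q 0 r r' = (if r = r' then 1 else 0)"
| "qpow C Q (Suc n) r r' = (\<Sum>m\<in>C. qpow C Q n r m * Q m r')"

text \<open>Q restricted to C is a row-stochastic, irreducible and aperiodic (= primitive) matrix.\<close>
definition stoch_irred_aperiodic :: "'r set \<Rightarrow> ('r \<Rightarrow> 'r \<Rightarrow> real) \<Rightarrow> bool" where
  "stoch_irred_aperiodic C Q \<longleftrightarrow>
     finite C \<and> C \<noteq> {} \<and>
     (\<forall>r\<in>C. \<forall>r'\<in>C. Q r r' \<ge> 0) \<and>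
     (\<forall>r\<in>C. (\<Sum>r'\<in>C. Q r r') = 1) \<and>
     (\<exists>N. \<forall>n\<ge>N. \<forall>r\<in>C. \<forall>r'\<in>C. qpow C Q n r r' > 0)"

definition stationary :: "'r set \<Rightarrow> ('r \<Rightarrow> 'r \<Rightarrow> real) \<Rightarrow> ('r \<Rightarrow> real) \<Rightarrow> bool" where
  "stationary C Q \<pi> \<longleftrightarrow> (\<forall>r\<in>C. \<pi> r \<ge> 0) \<and> (\<Sum>r\<in>C. \<pi> r) = 1 \<and>
     (\<forall>s\<in>C. (\<Sum>r\<in>C. \<pi> r * Q r s) = \<pi> s)"

definition entrywise_positive :: "real^2^2 \<Rightarrow> bool" where
  "entrywise_positive M \<longleftrightarrow> (\<forall>i j. M $ i $ j > 0)"

definition mA :: "real^2^2 \<Rightarrow> real" where "mA M = M $ 1 $ 1"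
definition mB :: "real^2^2 \<Rightarrow> real" where "mB M = M $ 1 $ 2"
definition mC :: "real^2^2 \<Rightarrow> real" where "mC M = M $ 2 $ 1"
definition mD :: "real^2^2 \<Rightarrow> real" where "mD M = M $ 2 $ 2"

definition mob_alpha :: "real^2^2 \<Rightarrow> real" where
  "mob_alpha M = (mA M - mB M - mC M + mD M) / 2"
definition mob_beta :: "real^2^2 \<Rightarrow> real" where
  "mob_beta M = (mA M + mB M - mC M - mD M) / 2"
definition mob_gamma :: "real^2^2 \<Rightarrow> real" where
  "mob_gamma M = (mA M - mB M + mC M - mD M) / 2"
definition mob_delta :: "real^2^2 \<Rightarrow> real" where
  "mob_delta M = (mA M + mB M + mC M + mD M) / 2"

definition mob_f :: "real^2^2 \<Rightarrow> real \<Rightarrow> real" where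
  "mob_f M x = (mob_alpha M * x + mob_beta M) / (mob_gamma M * x + mob_delta M)"

definition mob_fT0 :: "real^2^2 \<Rightarrow> real" where
  "mob_fT0 M = mob_gamma M / mob_delta M"

definition mob_ell :: "real^2^2 \<Rightarrow> real \<Rightarrow> complex" where
  "mob_ell M x = Ln (complex_of_real (mob_gamma M * x + mob_delta M))"

definition bcoef :: "real^2^2 \<Rightarrow> nat \<Rightarrow> nat \<Rightarrow> complex" where
  "bcoef M k n =
     (if n = 0 then 0
      else if k = 0 then complex_of_real (mob_fT0 M ^ n)
      else complex_of_real
        (\<Sum>l=1..min k n. real (n choose l) * real ((k - 1) choose (l - 1)) *
            (mob_fT0 M) ^ (n - l) * (- mob_f M 0) ^ (k - l) * (deriv (mob_f M) 0) ^ l))"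

definition vvec :: "real \<Rightarrow> complex \<Rightarrow> nat \<Rightarrow> complex" where
  "vvec x c n = (if n = 0 then c else complex_of_real (- ((- x) ^ n) / real n))"

definition Top :: "real^2^2 \<Rightarrow> (nat \<Rightarrow> complex) \<Rightarrow> nat \<Rightarrow> complex" where
  "Top M u k = (\<Sum>n. bcoef M k n * u n)"

definition Tsys :: "'r set \<Rightarrow> ('r \<Rightarrow> real) \<Rightarrow> ('r \<Rightarrow> 'r \<Rightarrow> real) \<Rightarrow> ('r \<Rightarrow> real^2^2)
    \<Rightarrow> ('r \<Rightarrow> nat \<Rightarrow> complex) \<Rightarrow> 'r \<Rightarrow> nat \<Rightarrow> complex" where
  "Tsys C \<pi> Q B U r' k =
     (\<Sum>r\<in>C. complex_of_real (\<pi> r * Q r r' / \<pi> r') * Top (B r) (U r) k)"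

definition vseed :: "'r set \<Rightarrow> ('r \<Rightarrow> real) \<Rightarrow> ('r \<Rightarrow> 'r \<Rightarrow> real) \<Rightarrow> ('r \<Rightarrow> real^2^2)
    \<Rightarrow> 'r \<Rightarrow> nat \<Rightarrow> complex" where
  "vseed C \<pi> Q B s k =
     (\<Sum>r\<in>C. complex_of_real (\<pi> r * Q r s / \<pi> s) *
        vvec (mob_f (B r) 0) (mob_ell (B r) 0) k)"

definition bracket0 :: "'r set \<Rightarrow> ('r \<Rightarrow> real) \<Rightarrow> ('r \<Rightarrow> nat \<Rightarrow> complex) \<Rightarrow> complex" where
  "bracket0 C \<pi> W = (\<Sum>r\<in>C. complex_of_real (\<pi> r) * W r 0)"

definition d_hyp :: "real \<Rightarrow> real \<Rightarrow> real" where
  "d_hyp x y = 2 * \<bar>artanh x - artanh y\<bar>"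

text \<open>Borel probability measures on (-1,1) (as Borel measures on the reals
  carried by (-1,1)) with finite first d_hyp-moment.\<close>
definition P1 :: "real measure \<Rightarrow> bool" where
  "P1 \<mu> \<longleftrightarrow> prob_space \<mu> \<and> sets \<mu> = sets borel \<and>
     emeasure \<mu> (UNIV - {-1<..<1}) = 0 \<and> integrable \<mu> (\<lambda>x. d_hyp x 0)"

definition H_fixed :: "'r set \<Rightarrow> ('r \<Rightarrow> real) \<Rightarrow> ('r \<Rightarrow> 'r \<Rightarrow> real) \<Rightarrow> ('r \<Rightarrow> real^2^2)
    \<Rightarrow> ('r \<Rightarrow> real measure) \<Rightarrow> bool" where
  "H_fixed C \<pi> Q B \<eta> \<longleftrightarrow>
     (\<forall>r'\<in>C. \<forall>A\<in>sets borel.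
        measure (\<eta> r') A = (\<Sum>r\<in>C. \<pi> r * Q r r' / \<pi> r' * measure (\<eta> r) (mob_f (B r) -` A)))"

definition psi :: "real \<Rightarrow> real^2" where
  "psi x = vector [(1 + x) / 2, (1 - x) / 2]"

definition norm1 :: "real^2 \<Rightarrow> real" where
  "norm1 v = (\<Sum>i\<in>UNIV. \<bar>v $ i\<bar>)"

end

theory Submission
  imports Defs "HOL-Analysis.Generalised_Binomial_Theorem"
begin



lemma ep_pos:
  assumes "entrywise_positive M"
  shows "mA M > 0" "mB M > 0" "mC M > 0" "mD M > 0"
  using assms unfolding entrywise_positive_def mA_def mB_def mC_def mD_def by auto

lemma den_eq: "mob_gamma M * x + mob_delta M = ((mA M + mC M) * (1 + x) + (mB M + mD M) * (1 - x)) / 2"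
  unfolding mob_gamma_def mob_delta_def by (simp add: field_simps)

lemma lin_pos:
  assumes "(p::real) > 0" "q > 0" "\<bar>x\<bar> \<le> 1"
  shows "p * (1 + x) + q * (1 - x) > 0"
proof (cases "x < 1")
  case True
  have "p * (1 + x) \<ge> 0" using assms by auto
  moreover have "q * (1 - x) > 0" using assms True by auto
  ultimately show ?thesis by linarith
next
  case False
  then have "x = 1" using assms by auto
  then show ?thesis using assms by simp
qed

lemma den_pos:
  assumes "entrywise_positive M" "\<bar>x\<bar> \<le> 1"
  shows "mob_gamma M * x + mob_delta M > 0"
proof -
  have p: "mA M > 0" "mB M > 0" "mC M > 0" "mD M > 0" using ep_pos[OF assms(1)] by auto
  have "(mA M + mC M) * (1 + x) + (mB M + mD M) * (1 - x) > 0"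
    using p by (intro lin_pos assms(2)) auto
  then show ?thesis unfolding den_eq by simp
qed

lemma delta_pos: "entrywise_positive M \<Longrightarrow> mob_delta M > 0"
  using den_pos[of M 0] by simp

lemma gamma_lt: "entrywise_positive M \<Longrightarrow> \<bar>mob_gamma M\<bar> < mob_delta M"
  using ep_pos[of M] unfolding mob_gamma_def mob_delta_def by auto

lemma fT_lt: "entrywise_positive M \<Longrightarrow> \<bar>mob_fT0 M\<bar> < 1"
proof -
  assume a: "entrywise_positive M"
  have d: "mob_delta M > 0" using delta_pos[OF a] .
  have g: "- mob_delta M < mob_gamma M" "mob_gamma M < mob_delta M" using gamma_lt[OF a] by auto
  have "mob_gamma M / mob_delta M < 1" using d g by (simp add: divide_less_eq)
  moreover have "-1 < mob_gamma M / mob_delta M" using d g by (simp add: less_divide_eq)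
  ultimately show ?thesis unfolding mob_fT0_def by linarith
qed


lemma onep_f: "mob_gamma M * x + mob_delta M \<noteq> 0 \<Longrightarrow>
   1 + mob_f M x = (mA M * (1 + x) + mB M * (1 - x)) / (mob_gamma M * x + mob_delta M)"
  unfolding mob_f_def mob_alpha_def mob_beta_def mob_gamma_def mob_delta_def
  by (simp add: field_simps)

lemma onem_f: "mob_gamma M * x + mob_delta M \<noteq> 0 \<Longrightarrow>
   1 - mob_f M x = (mC M * (1 + x) + mD M * (1 - x)) / (mob_gamma M * x + mob_delta M)"
  unfolding mob_f_def mob_alpha_def mob_beta_def mob_gamma_def mob_delta_def
  by (simp add: field_simps)

lemma f_in:
  assumes "entrywise_positive M" "\<bar>x\<bar> \<le> 1"
  shows "\<bar>mob_f M x\<bar> < 1"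
proof -
  have p: "mA M > 0" "mB M > 0" "mC M > 0" "mD M > 0" using ep_pos[OF assms(1)] by auto
  have d: "mob_gamma M * x + mob_delta M > 0" using den_pos[OF assms] .
  have "1 + mob_f M x > 0" using onep_f[of M x] d lin_pos[OF p(1,2) assms(2)] by simp
  moreover have "1 - mob_f M x > 0" using onem_f[of M x] d lin_pos[OF p(3,4) assms(2)] by simp
  ultimately show ?thesis by linarith
qed

lemma deriv_f0: "mob_delta M > 0 \<Longrightarrow> deriv (mob_f M) 0 = (mob_alpha M * mob_delta M - mob_beta M * mob_gamma M) / (mob_delta M)^2"
proof -
  assume d0: "mob_delta M > 0"
  have 1: "((\<lambda>x. mob_alpha M * x + mob_beta M) has_real_derivative mob_alpha M) (at 0)"
    by (rule derivative_eq_intros refl | simp)+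
  have 2: "((\<lambda>x. mob_gamma M * x + mob_delta M) has_real_derivative mob_gamma M) (at 0)"
    by (rule derivative_eq_intros refl | simp)+
  have "(mob_f M has_real_derivative
     ((mob_alpha M * (mob_gamma M * 0 + mob_delta M) - (mob_alpha M * 0 + mob_beta M) * mob_gamma M)
       / ((mob_gamma M * 0 + mob_delta M) * (mob_gamma M * 0 + mob_delta M)))) (at 0)"
    unfolding mob_f_def[abs_def] using d0
    by (intro DERIV_divide[OF 1 2]) simp
  then show ?thesis by (simp add: DERIV_imp_deriv power2_eq_square)
qed

lemma f_as: 
  assumes "entrywise_positive M" "\<bar>x\<bar> \<le> 1"
  shows "mob_f M x = mob_f M 0 + deriv (mob_f M) 0 * x / (1 + mob_fT0 M * x)"
proof -
  have d0: "mob_delta M > 0" using delta_pos[OF assms(1)] .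
  have d: "mob_gamma M * x + mob_delta M > 0" using den_pos[OF assms] .
  have a: "mob_f M x - mob_f M 0 = (mob_alpha M * mob_delta M - mob_beta M * mob_gamma M) * x / (mob_delta M * (mob_gamma M * x + mob_delta M))"
    unfolding mob_f_def using d0 d by (simp add: field_simps)
  have e: "1 + mob_fT0 M * x = (mob_gamma M * x + mob_delta M) / mob_delta M"
    unfolding mob_fT0_def using d0 by (simp add: field_simps)
  have "deriv (mob_f M) 0 * x / (1 + mob_fT0 M * x) = (mob_alpha M * mob_delta M - mob_beta M * mob_gamma M) * x / (mob_delta M * (mob_gamma M * x + mob_delta M))"
    unfolding deriv_f0[OF d0] e using d0 d by (simp add: power2_eq_square)
  then show ?thesis using a by simp
qed




definition vR :: "real \<Rightarrow> nat \<Rightarrow> real" where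
  "vR x n = (if n = 0 then 0 else - ((- x) ^ n) / real n)"

lemma vvec0: "vvec x 0 n = complex_of_real (vR x n)"
  unfolding vvec_def vR_def by simp

definition bR :: "real^2^2 \<Rightarrow> nat \<Rightarrow> nat \<Rightarrow> real" where
  "bR M k n =
     (if n = 0 then 0
      else if k = 0 then mob_fT0 M ^ n
      else (\<Sum>l=1..min k n. real (n choose l) * real ((k - 1) choose (l - 1)) *
            (mob_fT0 M) ^ (n - l) * (- mob_f M 0) ^ (k - l) * (deriv (mob_f M) 0) ^ l))"

lemma bcoefR: "bcoef M k n = complex_of_real (bR M k n)"
  unfolding bcoef_def bR_def by simp

lemma negbin:
  fixes z :: real
  assumes "\<bar>z\<bar> < 1"
  shows "(\<lambda>m. real ((m + l) choose m) * z ^ m) sums (1 / (1 - z) ^ Suc l)"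
proof -
  have "\<bar>-z\<bar> < 1" using assms by simp
  from gen_binomial_real[OF this, of "- real (Suc l)"]
  have s: "(\<lambda>n. ((- real (Suc l)) gchoose n) * (-z) ^ n) sums (1 + - z) powr (- real (Suc l))" .
  have e: "((- real (Suc l)) gchoose n) * (-z) ^ n = real ((n + l) choose n) * z ^ n" for n
  proof -
    have "((- real (Suc l)) gchoose n) = (-1) ^ n * ((real (Suc l) + of_nat n - 1) gchoose n)"
      by (rule gbinomial_minus)
    also have "real (Suc l) + of_nat n - 1 = of_nat (n + l)" by simp
    also have "(of_nat (n + l) gchoose n) = (real ((n + l) choose n))"
      by (simp add: binomial_gbinomial)
    finally have "((- real (Suc l)) gchoose n) = (-1) ^ n * real ((n + l) choose n)" .
    then show ?thesis by (simp add: power_minus')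
  qed
  have p: "(1 + - z) powr (- real (Suc l)) = 1 / (1 - z) ^ Suc l"
    using assms by (simp add: powr_minus powr_realpow divide_inverse del: of_nat_Suc)
  show ?thesis using s unfolding e p .
qed

lemma Sl:
  fixes t x :: real
  assumes "\<bar>t * x\<bar> < 1"
  shows "(\<lambda>n. real (n choose Suc l) * t ^ (n - Suc l) * vR x n) sums
           (- ((- x) ^ Suc l) / (real (Suc l) * (1 + t * x) ^ Suc l))"
proof -
  let ?L = "Suc l"
  let ?f = "\<lambda>n. real (n choose Suc l) * t ^ (n - Suc l) * vR x n"
  have z: "?f i = 0" if "i < ?L" for i using that by simp
  have "\<bar>- (t * x)\<bar> < 1" using assms by simp
  from sums_mult[OF negbin[OF this, of l], of "- ((- x) ^ ?L) / real ?L"]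
  have s: "(\<lambda>m. - ((- x) ^ ?L) / real ?L * (real ((m + l) choose m) * (- (t * x)) ^ m)) sums
          (- ((- x) ^ ?L) / real ?L * (1 / (1 - - (t * x)) ^ Suc l))" .
  have e: "?f (i + ?L) = - ((- x) ^ ?L) / real ?L * (real ((i + l) choose i) * (- (t * x)) ^ i)" for i
  proof -
    have b: "real (Suc l) * real (Suc (i + l) choose Suc l) = real (Suc (i + l)) * real ((i + l) choose l)"
      using Suc_times_binomial[of l "i + l"] by (metis of_nat_mult)
    have b2: "((i + l) choose l) = ((i + l) choose i)"
      using binomial_symmetric[of i "i + l"] by simp
    have c: "real (Suc (i + l) choose Suc l) / real (Suc (i + l)) = real ((i + l) choose i) / real (Suc l)"
      using b b2 by (simp add: field_simps)
    have "?f (i + ?L) = real (Suc (i + l) choose Suc l) / real (Suc (i + l)) * (t ^ i * (- ((- x) ^ (i + Suc l))))"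
      by (simp add: vR_def)
    also have "\<dots> = real ((i + l) choose i) / real (Suc l) * (t ^ i * (- ((- x) ^ (i + Suc l))))"
      using c by simp
    also have "\<dots> = - ((- x) ^ ?L) / real ?L * (real ((i + l) choose i) * (- (t * x)) ^ i)"
    proof -
      have "(- (t * x)) ^ i = t ^ i * (- x) ^ i" by (metis mult_minus_right power_mult_distrib)
      then show ?thesis by (simp add: power_add field_simps)
    qed
    finally show ?thesis .
  qed
  have "(\<lambda>i. ?f (i + ?L)) sums (- ((- x) ^ ?L) / real ?L * (1 / (1 - - (t * x)) ^ Suc l))"
    using s unfolding e .
  then have "?f sums (- ((- x) ^ ?L) / real ?L * (1 / (1 - - (t * x)) ^ Suc l))"
    using sums_zero_iff_shift[of ?L ?f] z by blast
  then show ?thesis by (simp add: field_simps)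
qed


lemma tx_lt: "entrywise_positive M \<Longrightarrow> \<bar>x\<bar> < 1 \<Longrightarrow> \<bar>mob_fT0 M * x\<bar> < 1"
proof -
  assume a: "entrywise_positive M" "\<bar>x\<bar> < 1"
  have "\<bar>mob_fT0 M\<bar> * \<bar>x\<bar> \<le> 1 * \<bar>x\<bar>" using fT_lt[OF a(1)] by (intro mult_right_mono) auto
  then show ?thesis using a(2) by (simp add: abs_mult)
qed

lemma binom_last:
  fixes u v :: real
  assumes "k > 0"
  shows "(\<Sum>l=1..k. real (k choose l) * u ^ l * v ^ (k - l)) = (u + v) ^ k - v ^ k"
proof -
  have "{..k} = insert 0 {1..k}" by auto
  then have "(u + v) ^ k = v ^ k + (\<Sum>l=1..k. real (k choose l) * u ^ l * v ^ (k - l))"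
    unfolding binomial_ring by (simp add: sum.insert)
  then show ?thesis by simp
qed

lemma aux: fixes a b l k Y Z W V :: real
  assumes "a / l = b / k"
  shows "a * Y * Z * (-(W) / (l * V)) = -(1/k) * (b * (Z * W / V) * Y)"
proof -
  have "a * Y * Z * (-(W) / (l * V)) = - ((a / l) * (Y * Z * W / V))" by simp
  also have "\<dots> = - ((b / k) * (Y * Z * W / V))" using assms by simp
  also have "\<dots> = -(1/k) * (b * (Z * W / V) * Y)" by simp
  finally show ?thesis .
qed

lemma TopR:
  assumes M: "entrywise_positive M" and x: "\<bar>x\<bar> < 1"
  shows "(\<lambda>n. bR M k n * vR x n) sums
    (if k = 0 then ln (1 + mob_fT0 M * x) else - ((- mob_f M x) ^ k) / real k + (- mob_f M 0) ^ k / real k)"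
proof -
  define t where "t = mob_fT0 M"
  define f0 where "f0 = mob_f M 0"
  define p where "p = deriv (mob_f M) 0"
  have tx: "\<bar>t * x\<bar> < 1" unfolding t_def by (rule tx_lt[OF M x])
  show ?thesis
  proof (cases k)
    case 0
    have e: "bR M k n * vR x n = - ((- (t * x)) ^ n) / real n" for n
    proof (cases n)
      case (Suc m)
      have e: "(- (t * x)) ^ n = t ^ n * (- x) ^ n" by (metis mult_minus_right power_mult_distrib)
      have h: "t ^ n * (- ((- x) ^ n) / real n) = - ((- (t * x)) ^ n) / real n" unfolding e by simp
      have "bR M k n * vR x n = t ^ n * (- ((- x) ^ n) / real n)"
        using 0 Suc by (simp add: bR_def vR_def t_def)
      then show ?thesis using h by (rule trans)
    qed (simp add: bR_def vR_def)
    have "(\<lambda>n. bR M k n * vR x n) sums ln (1 + t * x)" unfolding e using ln_series'[OF tx] by simp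
    then show ?thesis using 0 unfolding t_def by simp
  next
    case (Suc k')
    define F where "F l n = real ((k - 1) choose (l - 1)) * (-f0) ^ (k - l) * p ^ l *
       (real (n choose l) * t ^ (n - l) * vR x n)" for l n
    have eq: "bR M k n * vR x n = (\<Sum>l=1..k. F l n)" for n
    proof (cases "n = 0")
      case True then show ?thesis by (simp add: bR_def vR_def F_def)
    next
      case False
      have "bR M k n * vR x n = (\<Sum>l=1..min k n. real (n choose l) * real ((k - 1) choose (l - 1)) * t ^ (n - l) * (- f0) ^ (k - l) * p ^ l) * vR x n"
        using False Suc unfolding bR_def t_def f0_def p_def by simp
      also have "\<dots> = (\<Sum>l=1..min k n. F l n)"
        unfolding sum_distrib_right F_def by (rule sum.cong) (rule refl, simp only: mult_ac)
      also have "\<dots> = (\<Sum>l=1..k. F l n)"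
        by (rule sum.mono_neutral_left) (auto simp: F_def)
      finally show ?thesis .
    qed
    have "(\<lambda>n. \<Sum>l=1..k. F l n) sums (\<Sum>l=1..k. real ((k - 1) choose (l - 1)) * (-f0) ^ (k - l) * p ^ l *
           (- ((- x) ^ l) / (real l * (1 + t * x) ^ l)))"
    proof (rule sums_sum)
      fix l assume l: "l \<in> {1..k}"
      then obtain l' where l': "l = Suc l'" by (cases l) auto
      show "(\<lambda>n. F l n) sums (real ((k - 1) choose (l - 1)) * (-f0) ^ (k - l) * p ^ l *
           (- ((- x) ^ l) / (real l * (1 + t * x) ^ l)))"
        unfolding F_def l' by (rule sums_mult[OF Sl[OF tx]])
    qed
    moreover have "(\<Sum>l=1..k. real ((k - 1) choose (l - 1)) * (-f0) ^ (k - l) * p ^ l *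
           (- ((- x) ^ l) / (real l * (1 + t * x) ^ l))) = - ((- mob_f M x) ^ k) / real k + (- mob_f M 0) ^ k / real k"
    proof -
      define w where "w = p * x / (1 + t * x)"
      have kp: "k > 0" using Suc by simp
      have fx0: "mob_f M x = mob_f M 0 + deriv (mob_f M) 0 * x / (1 + mob_fT0 M * x)"
        using x by (intro f_as[OF M]) simp
      have fx: "mob_f M x = f0 + w" unfolding w_def f0_def p_def t_def by (rule fx0)
      have tm: "real ((k - 1) choose (l - 1)) * (-f0) ^ (k - l) * p ^ l *
           (- ((- x) ^ l) / (real l * (1 + t * x) ^ l)) = - (1 / real k) * (real (k choose l) * (-w) ^ l * (-f0) ^ (k - l))"
        if l: "l \<in> {1..k}" for l
      proof -
        obtain l' where l': "l = Suc l'" using l by (cases l) auto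
        have b: "real (Suc l') * real (Suc k' choose Suc l') = real (Suc k') * real (k' choose l')"
          using Suc_times_binomial[of l' k'] by (metis of_nat_mult)
        have c: "real (k' choose l') / real (Suc l') = real (Suc k' choose Suc l') / real (Suc k')"
          using b by (simp add: field_simps)
        have w: "(-w) ^ l = p ^ l * (- x) ^ l / (1 + t * x) ^ l"
        proof -
          have e1: "-w = (p * (-x)) / (1 + t * x)" unfolding w_def by simp
          have "(-w) ^ l = (p * (-x)) ^ l / (1 + t * x) ^ l" unfolding e1 by (rule power_divide)
          then show ?thesis by (simp only: power_mult_distrib)
        qed
        have c': "real ((k - 1) choose (l - 1)) / real l = real (k choose l) / real k"
          unfolding Suc l' by (simp only: diff_Suc_1) (rule c)
        show ?thesis unfolding w by (rule aux[OF c'])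
      qed
      have "(\<Sum>l=1..k. real ((k - 1) choose (l - 1)) * (-f0) ^ (k - l) * p ^ l *
           (- ((- x) ^ l) / (real l * (1 + t * x) ^ l))) =
            (\<Sum>l=1..k. - (1 / real k) * (real (k choose l) * (-w) ^ l * (-f0) ^ (k - l)))"
        by (rule sum.cong[OF refl]) (rule tm)
      also have "\<dots> = - (1 / real k) * ((-w + -f0) ^ k - (-f0) ^ k)"
        using binom_last[of k "-w" "-f0"] kp by (simp only: sum_distrib_left[symmetric])
      also have "\<dots> = - ((- mob_f M x) ^ k) / real k + (- mob_f M 0) ^ k / real k"
      proof -
        have e: "-w + -f0 = - mob_f M x" using fx by simp
        have e2: "- w - mob_f M 0 = - mob_f M x" using fx unfolding f0_def by simp
        show ?thesis unfolding e f0_def using kp by (simp add: field_simps e2)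
      qed
      finally show ?thesis .
    qed
    ultimately show ?thesis using Suc unfolding eq by simp
  qed
qed




definition e0 :: "nat \<Rightarrow> complex" where "e0 k = (if k = 0 then 1 else 0)"

lemma vvec_split: "vvec x c k = vvec x 0 k + c * e0 k"
  unfolding vvec_def e0_def by simp

lemma vvec_zero: "vvec 0 0 k = 0"
  unfolding vvec_def by simp

lemma vvec_k0: "vvec x 0 0 = 0"
  unfolding vvec_def by simp

lemma Top_e0: "(\<lambda>n. bcoef M k n * e0 n) sums 0"
proof -
  have "(\<lambda>n. bcoef M k n * e0 n) = (\<lambda>n. 0)"
    by (auto simp: e0_def bcoef_def)
  then show ?thesis by simp
qed

lemma ell_real:
  assumes M: "entrywise_positive M" and x: "\<bar>x\<bar> \<le> 1"
  shows "mob_ell M x = complex_of_real (ln (mob_gamma M * x + mob_delta M))"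
  unfolding mob_ell_def by (rule Ln_of_real[OF den_pos[OF M x]])

lemma ell_diff:
  assumes M: "entrywise_positive M" and x: "\<bar>x\<bar> < 1"
  shows "mob_ell M x - mob_ell M 0 = complex_of_real (ln (1 + mob_fT0 M * x))"
proof -
  have d0: "mob_delta M > 0" using delta_pos[OF M] .
  have d: "mob_gamma M * x + mob_delta M > 0" using den_pos[OF M] x by simp
  have "1 + mob_fT0 M * x = (mob_gamma M * x + mob_delta M) / mob_delta M"
    unfolding mob_fT0_def using d0 by (simp add: field_simps)
  then have "ln (1 + mob_fT0 M * x) = ln (mob_gamma M * x + mob_delta M) - ln (mob_delta M)"
    using d d0 by (simp add: ln_div)
  then show ?thesis using ell_real[OF M, of x] ell_real[OF M, of 0] x by simp
qed

lemma Top_vvec_sums: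
  assumes M: "entrywise_positive M" and x: "\<bar>x\<bar> < 1"
  shows "(\<lambda>n. bcoef M k n * vvec x 0 n) sums
     (vvec (mob_f M x) 0 k - vvec (mob_f M 0) 0 k + (mob_ell M x - mob_ell M 0) * e0 k)"
proof -
  have "(\<lambda>n. complex_of_real (bR M k n * vR x n)) sums complex_of_real
    (if k = 0 then ln (1 + mob_fT0 M * x) else - ((- mob_f M x) ^ k) / real k + (- mob_f M 0) ^ k / real k)"
    using TopR[OF M x, of k] by (rule sums_of_real)
  moreover have "(\<lambda>n. bcoef M k n * vvec x 0 n) = (\<lambda>n. complex_of_real (bR M k n * vR x n))"
    by (simp add: bcoefR vvec0)
  moreover have "complex_of_real
    (if k = 0 then ln (1 + mob_fT0 M * x) else - ((- mob_f M x) ^ k) / real k + (- mob_f M 0) ^ k / real k)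
     = vvec (mob_f M x) 0 k - vvec (mob_f M 0) 0 k + (mob_ell M x - mob_ell M 0) * e0 k"
    using ell_diff[OF M x] by (simp add: vvec_def e0_def)
  ultimately show ?thesis by simp
qed

lemma Top_vvec:
  assumes M: "entrywise_positive M" and x: "\<bar>x\<bar> < 1"
  shows "summable (\<lambda>n. bcoef M k n * vvec x 0 n)"
    and "Top M (vvec x 0) k = vvec (mob_f M x) 0 k - vvec (mob_f M 0) 0 k + (mob_ell M x - mob_ell M 0) * e0 k"
  using Top_vvec_sums[OF M x, of k] unfolding Top_def by (auto simp: sums_iff)




fun Phi :: "'r set \<Rightarrow> ('r \<Rightarrow> 'r \<Rightarrow> real) \<Rightarrow> ('r \<Rightarrow> real \<Rightarrow> real) \<Rightarrow> nat \<Rightarrow> 'r \<Rightarrow> (real \<Rightarrow> 'a::real_vector) \<Rightarrow> 'a" where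
  "Phi C p F 0 s g = g 0"
| "Phi C p F (Suc n) s g = (\<Sum>r\<in>C. p r s *\<^sub>R Phi C p F n r (\<lambda>y. g (F r y)))"

abbreviation I1 :: "real set" where "I1 \<equiv> {-1<..<1}"

lemma Phi_cong:
  assumes F: "\<forall>r\<in>C. \<forall>y\<in>I1. F r y \<in> I1" and gh: "\<forall>y\<in>I1. g y = h y"
  shows "Phi C p F n s g = Phi C p F n s h"
  using gh
proof (induction n arbitrary: s g h)
  case 0 then show ?case by simp
next
  case (Suc n)
  show ?case unfolding Phi.simps
  proof (rule sum.cong[OF refl])
    fix r assume r: "r \<in> C"
    have "\<forall>y\<in>I1. g (F r y) = h (F r y)" using Suc.prems F r by auto
    then show "p r s *\<^sub>R Phi C p F n r (\<lambda>y. g (F r y)) = p r s *\<^sub>R Phi C p F n r (\<lambda>y. h (F r y))"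
      using Suc.IH by metis
  qed
qed

lemma Phi_add: "Phi C p F n s (\<lambda>y. g y + h y) = Phi C p F n s g + Phi C p F n s h"
  by (induction n arbitrary: s g h) (simp_all add: sum.distrib scaleR_add_right)

lemma Phi_diff: "Phi C p F n s (\<lambda>y. g y - h y) = Phi C p F n s g - Phi C p F n s h"
  by (induction n arbitrary: s g h) (simp_all add: sum_subtractf scaleR_diff_right)

lemma Phi_zero: "Phi C p F n s (\<lambda>y. 0) = 0"
  by (induction n arbitrary: s) simp_all

lemma Phi_mult_right: "Phi C p F n s (\<lambda>y. g y * (c::'a::real_algebra)) = Phi C p F n s g * c"
  by (induction n arbitrary: s g) (simp_all add: sum_distrib_right)

lemma Phi_mult_left: "Phi C p F n s (\<lambda>y. (c::'a::real_algebra) * g y) = c * Phi C p F n s g"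
  by (induction n arbitrary: s g) (simp_all add: sum_distrib_left)

lemma Phi_const:
  assumes "\<forall>s\<in>C. (\<Sum>r\<in>C. p r s) = 1" "s \<in> C"
  shows "Phi C p F n s (\<lambda>y. c) = c"
  using assms(2)
proof (induction n arbitrary: s)
  case 0 then show ?case by simp
next
  case (Suc n)
  have "Phi C p F (Suc n) s (\<lambda>y. c) = (\<Sum>r\<in>C. p r s *\<^sub>R c)"
    using Suc.IH by simp
  also have "\<dots> = (\<Sum>r\<in>C. p r s) *\<^sub>R c" by (simp add: scaleR_sum_left)
  finally show ?case using assms(1) Suc.prems by simp
qed

lemma Phi_of_real: "Phi C p F n s (\<lambda>y. of_real (g y) :: 'a::real_algebra_1) = of_real (Phi C p F n s g)"
  by (induction n arbitrary: s g) (simp_all add: scaleR_conv_of_real)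

lemma Phi_Top:
  fixes G :: "real \<Rightarrow> nat \<Rightarrow> complex"
  assumes F: "\<forall>r\<in>C. \<forall>y\<in>I1. F r y \<in> I1"
    and hyp: "\<forall>y\<in>I1. \<forall>k. summable (\<lambda>m. bcoef M k m * G y m)"
  shows "(\<forall>k. summable (\<lambda>m. bcoef M k m * Phi C p F n s (\<lambda>y. G y m))) \<and>
         (\<forall>k. Top M (\<lambda>m. Phi C p F n s (\<lambda>y. G y m)) k = Phi C p F n s (\<lambda>y. Top M (G y) k))"
  using hyp
proof (induction n arbitrary: s G)
  case 0
  have "(0::real) \<in> I1" by simp
  then show ?case using 0 by simp
next
  case (Suc n)
  have IH: "(\<forall>k. summable (\<lambda>m. bcoef M k m * Phi C p F n r (\<lambda>y. G (F r y) m))) \<and>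
         (\<forall>k. Top M (\<lambda>m. Phi C p F n r (\<lambda>y. G (F r y) m)) k = Phi C p F n r (\<lambda>y. Top M (G (F r y)) k))"
    if r: "r \<in> C" for r
  proof (rule Suc.IH)
    show "\<forall>y\<in>I1. \<forall>k. summable (\<lambda>m. bcoef M k m * G (F r y) m)" using Suc.prems F r by blast
  qed
  have e: "bcoef M k m * Phi C p F (Suc n) s (\<lambda>y. G y m) =
     (\<Sum>r\<in>C. complex_of_real (p r s) * (bcoef M k m * Phi C p F n r (\<lambda>y. G (F r y) m)))" for k m
    by (simp add: sum_distrib_left scaleR_conv_of_real mult_ac)
  have s: "summable (\<lambda>m. bcoef M k m * Phi C p F (Suc n) s (\<lambda>y. G y m))" for k
    unfolding e by (intro summable_sum summable_mult) (use IH in blast)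
  have t: "Top M (\<lambda>m. Phi C p F (Suc n) s (\<lambda>y. G y m)) k = Phi C p F (Suc n) s (\<lambda>y. Top M (G y) k)" for k
  proof -
    have "Top M (\<lambda>m. Phi C p F (Suc n) s (\<lambda>y. G y m)) k =
      (\<Sum>r\<in>C. (\<Sum>m. complex_of_real (p r s) * (bcoef M k m * Phi C p F n r (\<lambda>y. G (F r y) m))))"
      unfolding Top_def e by (rule suminf_sum) (intro summable_mult, use IH in blast)
    also have "\<dots> = (\<Sum>r\<in>C. complex_of_real (p r s) * Top M (\<lambda>m. Phi C p F n r (\<lambda>y. G (F r y) m)) k)"
      unfolding Top_def by (rule sum.cong[OF refl]) (rule suminf_mult, use IH in blast)
    also have "\<dots> = (\<Sum>r\<in>C. complex_of_real (p r s) * Phi C p F n r (\<lambda>y. Top M (G (F r y)) k))"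
      using IH by simp
    also have "\<dots> = Phi C p F (Suc n) s (\<lambda>y. Top M (G y) k)"
      by (simp add: scaleR_conv_of_real)
    finally show ?thesis .
  qed
  show ?case using s t by blast
qed




lemma Top_lin:
  assumes "summable (\<lambda>m. bcoef M k m * u m)" "summable (\<lambda>m. bcoef M k m * v m)"
  shows "Top M (\<lambda>m. u m - v m + c * e0 m) k = Top M u k - Top M v k"
proof -
  have z: "(\<lambda>m. c * (bcoef M k m * e0 m)) sums (c * 0)" by (rule sums_mult[OF Top_e0])
  have "(\<lambda>m. bcoef M k m * (u m - v m + c * e0 m)) =
        (\<lambda>m. (bcoef M k m * u m - bcoef M k m * v m) + c * (bcoef M k m * e0 m))"
    by (simp add: algebra_simps)
  moreover have "(\<lambda>m. (bcoef M k m * u m - bcoef M k m * v m) + c * (bcoef M k m * e0 m)) sums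
      ((Top M u k - Top M v k) + c * 0)"
    unfolding Top_def by (intro sums_add sums_diff z) (use assms in \<open>simp_all add: summable_sums\<close>)
  ultimately show ?thesis unfolding Top_def[of M "\<lambda>m. u m - v m + c * e0 m"] by (simp add: sums_iff)
qed

lemma mobF_I1: "\<forall>r\<in>C. entrywise_positive (B r) \<Longrightarrow> \<forall>r\<in>C. \<forall>y\<in>I1. mob_f (B r) y \<in> I1"
  using f_in by (auto simp: abs_less_iff)

lemma TopPhi_vvec:
  assumes Bpos: "\<forall>r\<in>C. entrywise_positive (B r)" and s: "s \<in> C"
    and ps: "\<forall>s\<in>C. (\<Sum>r\<in>C. p r s) = 1"
  defines "F \<equiv> \<lambda>r. mob_f (B r)"
  shows "summable (\<lambda>m. bcoef (B s) k m * Phi C p F n s (\<lambda>y. vvec y 0 m))"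
    and "Top (B s) (\<lambda>m. Phi C p F n s (\<lambda>y. vvec y 0 m)) k =
       Phi C p F n s (\<lambda>y. vvec (F s y) 0 k) - vvec (F s 0) 0 k + (Phi C p F n s (mob_ell (B s)) - mob_ell (B s) 0) * e0 k"
proof -
  have FI: "\<forall>r\<in>C. \<forall>y\<in>I1. F r y \<in> I1" unfolding F_def by (rule mobF_I1[OF Bpos])
  have M: "entrywise_positive (B s)" using Bpos s by blast
  have hyp: "\<forall>y\<in>I1. \<forall>k. summable (\<lambda>m. bcoef (B s) k m * vvec y 0 m)"
    using Top_vvec(1)[OF M] by (auto simp: abs_less_iff)
  note PT = Phi_Top[OF FI hyp, of p n s]
  show "summable (\<lambda>m. bcoef (B s) k m * Phi C p F n s (\<lambda>y. vvec y 0 m))" using PT by blast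
  have "Top (B s) (\<lambda>m. Phi C p F n s (\<lambda>y. vvec y 0 m)) k = Phi C p F n s (\<lambda>y. Top (B s) (vvec y 0) k)"
    using PT by blast
  also have "\<dots> = Phi C p F n s (\<lambda>y. vvec (F s y) 0 k - vvec (F s 0) 0 k + (mob_ell (B s) y - mob_ell (B s) 0) * e0 k)"
    by (rule Phi_cong[OF FI]) (auto simp: F_def abs_less_iff intro!: Top_vvec(2)[OF M])
  also have "\<dots> = Phi C p F n s (\<lambda>y. vvec (F s y) 0 k) - vvec (F s 0) 0 k + (Phi C p F n s (mob_ell (B s)) - mob_ell (B s) 0) * e0 k"
    by (simp only: Phi_add Phi_diff Phi_mult_right Phi_const[OF ps s])
  finally show "Top (B s) (\<lambda>m. Phi C p F n s (\<lambda>y. vvec y 0 m)) k =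
       Phi C p F n s (\<lambda>y. vvec (F s y) 0 k) - vvec (F s 0) 0 k + (Phi C p F n s (mob_ell (B s)) - mob_ell (B s) 0) * e0 k" .
qed

lemma sum_lin3:
  fixes c X Y D :: "'a \<Rightarrow> complex"
  shows "(\<Sum>s\<in>A. c s * (X s - Y s + D s * e)) = (\<Sum>s\<in>A. c s * X s) - (\<Sum>s\<in>A. c s * Y s) + (\<Sum>s\<in>A. c s * D s) * e"
  by (simp add: sum_subtractf sum.distrib sum_distrib_right sum_distrib_left algebra_simps)

lemma Tn_formula:
  assumes Bpos: "\<forall>r\<in>C. entrywise_positive (B r)"
    and ps: "\<forall>s\<in>C. (\<Sum>r\<in>C. \<pi> r * Q r s / \<pi> s) = 1"
  defines "p \<equiv> \<lambda>r s. \<pi> r * Q r s / \<pi> s"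
  defines "F \<equiv> \<lambda>r. mob_f (B r)"
  defines "cc \<equiv> \<lambda>n s. (\<Sum>r\<in>C. p r s *\<^sub>R (Phi C p F n r (mob_ell (B r)) -
                 (if n = 0 then 0 else Phi C p F (n - 1) r (mob_ell (B r)))))"
  defines "W \<equiv> \<lambda>n s k. Phi C p F (Suc n) s (\<lambda>y. vvec y 0 k) - Phi C p F n s (\<lambda>y. vvec y 0 k) + cc n s * e0 k"
  shows "\<forall>s\<in>C. (Tsys C \<pi> Q B ^^ n) (vseed C \<pi> Q B) s = W n s"
proof (induction n)
  case 0
  show ?case
  proof
    fix s assume s: "s \<in> C"
    show "(Tsys C \<pi> Q B ^^ 0) (vseed C \<pi> Q B) s = W 0 s"
    proof
      fix k
      have "(Tsys C \<pi> Q B ^^ 0) (vseed C \<pi> Q B) s k =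
          (\<Sum>r\<in>C. complex_of_real (p r s) * (vvec (F r 0) 0 k + mob_ell (B r) 0 * e0 k))"
        unfolding vseed_def p_def F_def by (simp add: vvec_split[of _ "mob_ell _ 0"])
      also have "\<dots> = W 0 s k"
        unfolding W_def cc_def by (simp add: vvec_zero scaleR_conv_of_real sum.distrib sum_distrib_right sum_distrib_left algebra_simps)
      finally show "(Tsys C \<pi> Q B ^^ 0) (vseed C \<pi> Q B) s k = W 0 s k" .
    qed
  qed
next
  case (Suc n)
  have ps': "\<forall>s\<in>C. (\<Sum>r\<in>C. p r s) = 1" using ps unfolding p_def by simp
  show ?case
  proof
    fix s' assume s': "s' \<in> C"
    show "(Tsys C \<pi> Q B ^^ Suc n) (vseed C \<pi> Q B) s' = W (Suc n) s'"
    proof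
      fix k
      have step: "Top (B s) (W n s) k = Phi C p F (Suc n) s (\<lambda>y. vvec (F s y) 0 k) - Phi C p F n s (\<lambda>y. vvec (F s y) 0 k)
          + (Phi C p F (Suc n) s (mob_ell (B s)) - Phi C p F n s (mob_ell (B s))) * e0 k" if s: "s \<in> C" for s
      proof -
        have "Top (B s) (W n s) k = Top (B s) (\<lambda>m. Phi C p F (Suc n) s (\<lambda>y. vvec y 0 m)) k
            - Top (B s) (\<lambda>m. Phi C p F n s (\<lambda>y. vvec y 0 m)) k"
          unfolding W_def F_def by (rule Top_lin) (rule TopPhi_vvec(1)[OF Bpos s ps'])+
        also have "\<dots> = Phi C p F (Suc n) s (\<lambda>y. vvec (F s y) 0 k) - Phi C p F n s (\<lambda>y. vvec (F s y) 0 k)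
          + (Phi C p F (Suc n) s (mob_ell (B s)) - Phi C p F n s (mob_ell (B s))) * e0 k"
          unfolding F_def TopPhi_vvec(2)[OF Bpos s ps'] by (simp add: algebra_simps)
        finally show ?thesis .
      qed
      have "(Tsys C \<pi> Q B ^^ Suc n) (vseed C \<pi> Q B) s' k =
           (\<Sum>s\<in>C. complex_of_real (p s s') * Top (B s) (W n s) k)"
        using Suc.IH unfolding Tsys_def p_def by simp
      also have "\<dots> = (\<Sum>s\<in>C. complex_of_real (p s s') * (Phi C p F (Suc n) s (\<lambda>y. vvec (F s y) 0 k) - Phi C p F n s (\<lambda>y. vvec (F s y) 0 k)
          + (Phi C p F (Suc n) s (mob_ell (B s)) - Phi C p F n s (mob_ell (B s))) * e0 k))"
        by (rule sum.cong[OF refl]) (simp add: step)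
      also have "\<dots> = W (Suc n) s' k"
      proof -
        have A: "Phi C p F (Suc (Suc n)) s' (\<lambda>y. vvec y 0 k) = (\<Sum>s\<in>C. complex_of_real (p s s') * Phi C p F (Suc n) s (\<lambda>y. vvec (F s y) 0 k))"
          by (simp only: Phi.simps(2) scaleR_conv_of_real)
        have B: "Phi C p F (Suc n) s' (\<lambda>y. vvec y 0 k) = (\<Sum>s\<in>C. complex_of_real (p s s') * Phi C p F n s (\<lambda>y. vvec (F s y) 0 k))"
          by (simp only: Phi.simps(2) scaleR_conv_of_real)
        have Cc: "cc (Suc n) s' = (\<Sum>s\<in>C. complex_of_real (p s s') * (Phi C p F (Suc n) s (mob_ell (B s)) - Phi C p F n s (mob_ell (B s))))"
          unfolding cc_def by (simp del: Phi.simps add: scaleR_conv_of_real)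
        show ?thesis unfolding W_def A B Cc by (rule sum_lin3)
      qed
      finally show "(Tsys C \<pi> Q B ^^ Suc n) (vseed C \<pi> Q B) s' k = W (Suc n) s' k" .
    qed
  qed
qed




lemma stat_qpow:
  assumes pi: "stationary C Q \<pi>" and fin: "finite C" and s: "s \<in> C"
  shows "(\<Sum>r\<in>C. \<pi> r * qpow C Q n r s) = \<pi> s"
  using s
proof (induction n arbitrary: s)
  case 0
  have "(\<Sum>r\<in>C. \<pi> r * qpow C Q 0 r s) = (\<Sum>r\<in>C. if r = s then \<pi> r else 0)"
    by (rule sum.cong) auto
  also have "\<dots> = \<pi> s" using 0 fin by simp
  finally show ?case .
next
  case (Suc n)
  have "(\<Sum>r\<in>C. \<pi> r * qpow C Q (Suc n) r s) = (\<Sum>r\<in>C. \<Sum>m\<in>C. \<pi> r * qpow C Q n r m * Q m s)"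
    by (simp add: sum_distrib_left mult_ac)
  also have "\<dots> = (\<Sum>m\<in>C. \<Sum>r\<in>C. \<pi> r * qpow C Q n r m * Q m s)" by (rule sum.swap)
  also have "\<dots> = (\<Sum>m\<in>C. \<pi> m * Q m s)"
  proof (rule sum.cong[OF refl])
    fix m assume m: "m \<in> C"
    have "(\<Sum>r\<in>C. \<pi> r * qpow C Q n r m * Q m s) = (\<Sum>r\<in>C. \<pi> r * qpow C Q n r m) * Q m s"
      by (simp add: sum_distrib_right)
    then show "(\<Sum>r\<in>C. \<pi> r * qpow C Q n r m * Q m s) = \<pi> m * Q m s" using Suc.IH[OF m] by simp
  qed
  also have "\<dots> = \<pi> s" using pi Suc.prems unfolding stationary_def by blast
  finally show ?case .
qed

lemma pi_pos:
  assumes Q: "stoch_irred_aperiodic C Q" and pi: "stationary C Q \<pi>" and s: "s \<in> C"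
  shows "\<pi> s > 0"
proof -
  have fin: "finite C" using Q unfolding stoch_irred_aperiodic_def by blast
  obtain N where N: "\<forall>n\<ge>N. \<forall>r\<in>C. \<forall>r'\<in>C. qpow C Q n r r' > 0"
    using Q unfolding stoch_irred_aperiodic_def by blast
  have nn: "\<forall>r\<in>C. \<pi> r \<ge> 0" and one: "(\<Sum>r\<in>C. \<pi> r) = 1" using pi unfolding stationary_def by auto
  obtain r0 where r0: "r0 \<in> C" "\<pi> r0 > 0"
  proof (rule ccontr)
    assume "\<not> thesis"
    then have "\<forall>r\<in>C. \<pi> r = 0" using nn that by force
    then have "(\<Sum>r\<in>C. \<pi> r) = 0" by simp
    then show False using one by simp
  qed
  have "\<pi> r0 * qpow C Q N r0 s > 0" using r0 N s by simp
  also have "\<pi> r0 * qpow C Q N r0 s \<le> (\<Sum>r\<in>C. \<pi> r * qpow C Q N r s)"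
  proof -
    have qn: "\<forall>r\<in>C. qpow C Q N r s \<ge> 0" using N s by (simp add: less_imp_le)
    show ?thesis using fin r0 qn nn by (intro member_le_sum) auto
  qed
  also have "\<dots> = \<pi> s" by (rule stat_qpow[OF pi fin s])
  finally show ?thesis .
qed

lemma norm1_psi:
  assumes M: "entrywise_positive M" and x: "\<bar>x\<bar> \<le> 1"
  shows "norm1 (M *v psi x) = mob_gamma M * x + mob_delta M"
proof -
  have p: "mA M > 0" "mB M > 0" "mC M > 0" "mD M > 0" using ep_pos[OF M] by auto
  have x1: "(1 + x) / 2 \<ge> 0" "(1 - x) / 2 \<ge> 0" using x by auto
  have "norm1 (M *v psi x) = \<bar>mA M * ((1 + x) / 2) + mB M * ((1 - x) / 2)\<bar> + \<bar>mC M * ((1 + x) / 2) + mD M * ((1 - x) / 2)\<bar>"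
    unfolding norm1_def psi_def matrix_vector_mult_def by (simp add: sum_2 mA_def mB_def mC_def mD_def)
  also have "\<dots> = mA M * ((1 + x) / 2) + mB M * ((1 - x) / 2) + (mC M * ((1 + x) / 2) + mD M * ((1 - x) / 2))"
    using p x1 by (simp add: abs_of_nonneg)
  also have "\<dots> = mob_gamma M * x + mob_delta M" unfolding den_eq by (simp add: field_simps)
  finally show ?thesis .
qed




lemma pe_eq:
  assumes "prob_space M" shows "emeasure M A = ennreal (measure M A)"
proof -
  interpret prob_space M by fact
  show ?thesis by (rule emeasure_eq_measure)
qed

lemma mix_integral:
  fixes \<eta> :: "'r \<Rightarrow> real measure" and F :: "'r \<Rightarrow> real \<Rightarrow> real" and w :: "'r \<Rightarrow> real"
    and \<mu> :: "real measure" and g :: "real \<Rightarrow> real"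
  assumes fin: "finite C" and wnn: "\<forall>r\<in>C. w r \<ge> 0" and w1: "(\<Sum>r\<in>C. w r) = 1"
    and eta: "\<forall>r\<in>C. prob_space (\<eta> r) \<and> sets (\<eta> r) = sets borel"
    and mu: "prob_space \<mu>" "sets \<mu> = sets borel"
    and Fm: "\<forall>r\<in>C. F r \<in> borel_measurable borel"
    and mix: "\<forall>A\<in>sets borel. measure \<mu> A = (\<Sum>r\<in>C. w r * measure (\<eta> r) (F r -` A))"
    and gm: "g \<in> borel_measurable borel" and gb: "\<forall>x. \<bar>g x\<bar> \<le> Bd"
  shows "integral\<^sup>L \<mu> g = (\<Sum>r\<in>C. w r * integral\<^sup>L (\<eta> r) (\<lambda>x. g (F r x)))"
proof -
  define f where "f r = (if r \<in> C then w r else 0)" for r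
  have fnn: "\<And>x. 0 \<le> f x" using wnn unfolding f_def by auto
  have fprob: "(\<integral>\<^sup>+x. ennreal (f x) \<partial>count_space UNIV) = 1"
  proof -
    have "(\<integral>\<^sup>+x. ennreal (f x) \<partial>count_space UNIV) = (\<Sum>x\<in>C. ennreal (f x))"
      by (rule nn_integral_count_space'[OF fin]) (auto simp: f_def)
    also have "\<dots> = ennreal (\<Sum>x\<in>C. f x)" using fnn by (simp add: sum_ennreal)
    also have "(\<Sum>x\<in>C. f x) = 1" using w1 unfolding f_def by simp
    finally show ?thesis by simp
  qed
  define P where "P = embed_pmf f"
  have pmfP: "pmf P r = f r" for r unfolding P_def by (rule pmf_embed_pmf[OF fnn fprob])
  have setP: "set_pmf P \<subseteq> C" unfolding set_pmf_eq pmfP f_def by auto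
  have Fm': "F r \<in> measurable (\<eta> r) borel" if "r \<in> C" for r
    using Fm eta that measurable_cong_sets[of "\<eta> r" borel borel borel] by auto
  define K where "K r = (if r \<in> C then distr (\<eta> r) borel (F r) else return borel 0)" for r
  have Kprob: "prob_space (K r)" for r
  proof (cases "r \<in> C")
    case True
    then show ?thesis unfolding K_def using eta Fm'[OF True] by (auto intro: prob_space.prob_space_distr)
  qed (simp add: K_def prob_space_return)
  have Ksets: "sets (K r) = sets borel" for r unfolding K_def by simp
  have Kmeas: "K \<in> measurable (measure_pmf P) (subprob_algebra borel)"
    using Kprob Ksets by (auto simp: space_subprob_algebra prob_space_imp_subprob_space)
  have eq: "\<mu> = measure_pmf P \<bind> K"
  proof (rule measure_eqI)
    show "sets \<mu> = sets (measure_pmf P \<bind> K)" using mu(2) Ksets by simp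
    fix A assume "A \<in> sets \<mu>"
    then have A: "A \<in> sets borel" using mu(2) by simp
    have "emeasure (measure_pmf P \<bind> K) A = (\<integral>\<^sup>+r. emeasure (K r) A \<partial>measure_pmf P)"
      by (rule emeasure_bind[OF _ Kmeas A]) simp
    also have "\<dots> = (\<integral>\<^sup>+r. ennreal (pmf P r) * emeasure (K r) A \<partial>count_space UNIV)"
      by (rule nn_integral_measure_pmf)
    also have "\<dots> = (\<Sum>r\<in>C. ennreal (pmf P r) * emeasure (K r) A)"
      by (rule nn_integral_count_space'[OF fin]) (auto simp: pmfP f_def)
    also have "\<dots> = (\<Sum>r\<in>C. ennreal (w r * measure (\<eta> r) (F r -` A)))"
    proof (rule sum.cong[OF refl])
      fix r assume r: "r \<in> C"
      have sp: "space (\<eta> r) = UNIV" using eta r sets_eq_imp_space_eq[of "\<eta> r" borel] by auto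
      have "emeasure (K r) A = emeasure (\<eta> r) (F r -` A)"
        unfolding K_def using r by (simp add: emeasure_distr[OF Fm'[OF r] A] sp)
      also have "\<dots> = ennreal (measure (\<eta> r) (F r -` A))"
        using eta r by (simp add: pe_eq)
      finally show "ennreal (pmf P r) * emeasure (K r) A = ennreal (w r * measure (\<eta> r) (F r -` A))"
        using r wnn by (simp add: pmfP f_def ennreal_mult)
    qed
    also have "\<dots> = ennreal (\<Sum>r\<in>C. w r * measure (\<eta> r) (F r -` A))"
      using wnn by (intro sum_ennreal) (auto intro!: mult_nonneg_nonneg)
    also have "\<dots> = emeasure \<mu> A"
      using mix A mu(1) by (simp add: pe_eq)
    finally show "emeasure \<mu> A = emeasure (measure_pmf P \<bind> K) A" by simp
  qed
  have "integral\<^sup>L \<mu> g = (\<integral>r. integral\<^sup>L (K r) g \<partial>measure_pmf P)"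
    unfolding eq
  proof (rule integral_bind[OF gm _ Kmeas])
    show "\<And>x. x \<in> space borel \<Longrightarrow> \<bar>g x\<bar> \<le> Bd" using gb by simp
    show "finite_measure (measure_pmf P)" by (rule measure_pmf.finite_measure_axioms)
    show "AE x in measure_pmf P. emeasure (K x) (space (K x)) \<le> ennreal 1"
      using Kprob by (simp add: prob_space.emeasure_space_1)
  qed
  also have "\<dots> = (\<Sum>r\<in>C. pmf P r *\<^sub>R integral\<^sup>L (K r) g)"
    by (rule integral_measure_pmf[OF fin]) (use setP in auto)
  also have "\<dots> = (\<Sum>r\<in>C. w r * integral\<^sup>L (\<eta> r) (\<lambda>x. g (F r x)))"
  proof (rule sum.cong[OF refl])
    fix r assume r: "r \<in> C"
    show "pmf P r *\<^sub>R integral\<^sup>L (K r) g = w r * integral\<^sup>L (\<eta> r) (\<lambda>x. g (F r x))"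
      using r by (simp add: pmfP f_def K_def integral_distr[OF Fm'[OF r] gm])
  qed
  finally show ?thesis .
qed




lemma Gderiv:
  fixes u v u' v' :: real
  assumes "u > 0" "v > 0" "u' > 0" "v' > 0"
  shows "((\<lambda>t. ln (u * exp t + v) - ln (u' * exp t + v')) has_real_derivative
     (u * exp x / (u * exp x + v) - u' * exp x / (u' * exp x + v'))) (at x)"
proof -
  have p1: "u * exp x + v > 0" "u' * exp x + v' > 0" using assms by (auto intro!: add_pos_pos)
  have d1: "((\<lambda>t. u * exp t + v) has_real_derivative u * exp x) (at x)"
    by (auto intro!: derivative_eq_intros)
  have d2: "((\<lambda>t. u' * exp t + v') has_real_derivative u' * exp x) (at x)"
    by (auto intro!: derivative_eq_intros)
  have l1: "((\<lambda>t. ln (u * exp t + v)) has_real_derivative 1 / (u * exp x + v) * (u * exp x)) (at x)"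
    by (rule DERIV_chain2[OF DERIV_ln_divide[OF p1(1)] d1])
  have l2: "((\<lambda>t. ln (u' * exp t + v')) has_real_derivative 1 / (u' * exp x + v') * (u' * exp x)) (at x)"
    by (rule DERIV_chain2[OF DERIV_ln_divide[OF p1(2)] d2])
  show ?thesis using DERIV_diff[OF l1 l2] by simp
qed

lemma Gbound:
  fixes u v u' v' y :: real
  assumes "u > 0" "v > 0" "u' > 0" "v' > 0" "y > 0"
  shows "\<bar>u * y / (u * y + v) - u' * y / (u' * y + v')\<bar> \<le> \<bar>u * v' - v * u'\<bar> / (u * v' + v * u')"
proof -
  have p1: "u * y + v > 0" "u' * y + v' > 0" "u * v' + v * u' > 0" using assms by (auto intro!: add_pos_pos)
  have e: "u * y / (u * y + v) - u' * y / (u' * y + v') = (u * v' - v * u') * (y / ((u * y + v) * (u' * y + v')))"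
    using p1 by (simp add: field_simps)
  have q: "y * (u * v' + v * u') \<le> (u * y + v) * (u' * y + v')"
  proof -
    have "(u * y + v) * (u' * y + v') = y * (u * v' + v * u') + (u * u' * y * y + v * v')"
      by (simp add: algebra_simps)
    moreover have "u * u' * y * y + v * v' \<ge> 0" using assms by simp
    ultimately show ?thesis by linarith
  qed
  have "y / ((u * y + v) * (u' * y + v')) \<le> 1 / (u * v' + v * u')"
    using q p1 by (simp add: divide_simps)
  moreover have "y / ((u * y + v) * (u' * y + v')) \<ge> 0" using p1 assms by simp
  ultimately have "\<bar>u * v' - v * u'\<bar> * (y / ((u * y + v) * (u' * y + v'))) \<le> \<bar>u * v' - v * u'\<bar> * (1 / (u * v' + v * u'))"
    by (intro mult_left_mono) auto
  moreover have "\<bar>u * y / (u * y + v) - u' * y / (u' * y + v')\<bar> = \<bar>u * v' - v * u'\<bar> * (y / ((u * y + v) * (u' * y + v')))"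
    unfolding e abs_mult using p1 assms by simp
  ultimately show ?thesis by simp
qed

lemma glip:
  fixes u v u' v' :: real
  assumes pos: "u > 0" "v > 0" "u' > 0" "v' > 0"
  shows "\<bar>(ln (u * exp t1 + v) - ln (u' * exp t1 + v')) - (ln (u * exp t2 + v) - ln (u' * exp t2 + v'))\<bar>
     \<le> \<bar>u * v' - v * u'\<bar> / (u * v' + v * u') * \<bar>t1 - t2\<bar>"
proof -
  define G where "G t = ln (u * exp t + v) - ln (u' * exp t + v')" for t
  define \<kappa> where "\<kappa> = \<bar>u * v' - v * u'\<bar> / (u * v' + v * u')"
  have key: "\<bar>G b - G a\<bar> \<le> \<kappa> * (b - a)" if ab: "a < b" for a b
  proof -
    have "\<And>x. a \<le> x \<Longrightarrow> x \<le> b \<Longrightarrow> (G has_real_derivative (u * exp x / (u * exp x + v) - u' * exp x / (u' * exp x + v'))) (at x)"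
      unfolding G_def[abs_def] using Gderiv[OF pos] by blast
    from MVT2[OF ab this] obtain z where z: "a < z" "z < b"
      and eq: "G b - G a = (b - a) * (u * exp z / (u * exp z + v) - u' * exp z / (u' * exp z + v'))" by blast
    have "\<bar>G b - G a\<bar> = (b - a) * \<bar>u * exp z / (u * exp z + v) - u' * exp z / (u' * exp z + v')\<bar>"
      unfolding eq using ab by (simp add: abs_mult)
    also have "\<dots> \<le> (b - a) * \<kappa>"
      unfolding \<kappa>_def using ab by (intro mult_left_mono Gbound[OF pos]) auto
    finally show ?thesis by (simp add: mult.commute)
  qed
  have "\<bar>G t1 - G t2\<bar> \<le> \<kappa> * \<bar>t1 - t2\<bar>"
  proof (cases t1 t2 rule: linorder_cases)
    case less then show ?thesis using key[OF less] by (simp add: abs_minus_commute)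
  next
    case equal then show ?thesis by simp
  next
    case greater then show ?thesis using key[OF greater] by simp
  qed
  then show ?thesis unfolding G_def \<kappa>_def .
qed




lemma two_artanh: "2 * artanh (x::real) = ln ((1 + x) / (1 - x))"
  unfolding artanh_def by simp

lemma dhyp_eq: "d_hyp y z = \<bar>2 * artanh y - 2 * artanh z\<bar>"
proof -
  have e: "2 * artanh y - 2 * artanh z = (2::real) * (artanh y - artanh z)" by (rule right_diff_distrib[symmetric])
  show ?thesis unfolding d_hyp_def e abs_mult by simp
qed

lemma P_facts:
  fixes x :: real assumes x: "\<bar>x\<bar> < 1"
  shows "(1 + x) / (1 - x) > 0" "exp (2 * artanh x) = (1 + x) / (1 - x)"
proof -
  show p: "(1 + x) / (1 - x) > 0" using x by (simp add: abs_less_iff)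
  show "exp (2 * artanh x) = (1 + x) / (1 - x)" unfolding two_artanh using p by simp
qed

lemma H_f:
  assumes M: "entrywise_positive M" and x: "\<bar>x\<bar> < 1"
  defines "t \<equiv> 2 * artanh x"
  shows "2 * artanh (mob_f M x) = ln (mA M * exp t + mB M) - ln (mC M * exp t + mD M)"
proof -
  have p: "mA M > 0" "mB M > 0" "mC M > 0" "mD M > 0" using ep_pos[OF M] by auto
  have x1: "1 - x > 0" "1 + x > 0" using x by (auto simp: abs_less_iff)
  have d: "mob_gamma M * x + mob_delta M > 0" using den_pos[OF M] x by simp
  define P where "P = (1 + x) / (1 - x)"
  have eP: "exp t = P" unfolding t_def P_def using P_facts[OF x] by simp
  have n1: "mA M * (1 + x) + mB M * (1 - x) = (mA M * P + mB M) * (1 - x)"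
    unfolding P_def using x1 by (simp add: field_simps)
  have n2: "mC M * (1 + x) + mD M * (1 - x) = (mC M * P + mD M) * (1 - x)"
    unfolding P_def using x1 by (simp add: field_simps)
  have "(1 + mob_f M x) / (1 - mob_f M x) = (mA M * (1 + x) + mB M * (1 - x)) / (mC M * (1 + x) + mD M * (1 - x))"
    using onep_f[of M x] onem_f[of M x] d by simp
  also have "\<dots> = (mA M * P + mB M) / (mC M * P + mD M)"
    unfolding n1 n2 using x1 by simp
  finally have e: "(1 + mob_f M x) / (1 - mob_f M x) = (mA M * P + mB M) / (mC M * P + mD M)" .
  have pP: "P > 0" unfolding P_def using P_facts[OF x] by simp
  have "mA M * P + mB M > 0" "mC M * P + mD M > 0" using p pP by (auto intro!: add_pos_pos)
  then show ?thesis unfolding two_artanh e eP by (simp add: ln_div)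
qed

lemma H_ell:
  assumes M: "entrywise_positive M" and x: "\<bar>x\<bar> < 1"
  defines "t \<equiv> 2 * artanh x"
  shows "ln (mob_gamma M * x + mob_delta M) = ln ((mA M + mC M) * exp t + (mB M + mD M)) - ln (1 * exp t + 1)"
proof -
  have p: "mA M > 0" "mB M > 0" "mC M > 0" "mD M > 0" using ep_pos[OF M] by auto
  have x1: "1 - x > 0" "1 + x > 0" using x by (auto simp: abs_less_iff)
  define P where "P = (1 + x) / (1 - x)"
  have eP: "exp t = P" unfolding t_def P_def using P_facts[OF x] by simp
  have pP: "P > 0" unfolding P_def using P_facts[OF x] by simp
  have "mob_gamma M * x + mob_delta M = ((mA M + mC M) * P + (mB M + mD M)) / (1 * P + 1)"
    unfolding den_eq P_def using x1 by (simp add: field_simps)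
  moreover have "(mA M + mC M) * P + (mB M + mD M) > 0" "1 * P + 1 > 0" using p pP by (auto intro!: add_pos_pos)
  ultimately show ?thesis unfolding eP by (simp add: ln_div)
qed

definition kap :: "real^2^2 \<Rightarrow> real" where
  "kap M = \<bar>mA M * mD M - mB M * mC M\<bar> / (mA M * mD M + mB M * mC M)"

lemma kap_lt: "entrywise_positive M \<Longrightarrow> 0 \<le> kap M \<and> kap M < 1"
proof -
  assume M: "entrywise_positive M"
  have p: "mA M > 0" "mB M > 0" "mC M > 0" "mD M > 0" using ep_pos[OF M] by auto
  have q: "mA M * mD M > 0" "mB M * mC M > 0" using p by auto
  then have "\<bar>mA M * mD M - mB M * mC M\<bar> < mA M * mD M + mB M * mC M" by (auto simp: abs_less_iff)
  then show ?thesis unfolding kap_def using q by (simp add: divide_less_eq)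
qed

lemma f_contr:
  assumes M: "entrywise_positive M" and y: "\<bar>y\<bar> < 1" and z: "\<bar>z\<bar> < 1"
  shows "d_hyp (mob_f M y) (mob_f M z) \<le> kap M * d_hyp y z"
proof -
  have p: "mA M > 0" "mB M > 0" "mC M > 0" "mD M > 0" using ep_pos[OF M] by auto
  show ?thesis
    unfolding dhyp_eq H_f[OF M y] H_f[OF M z] kap_def
    using glip[OF p(1,2,3,4), of "2 * artanh y" "2 * artanh z"] by simp
qed

lemma ell_lip:
  assumes M: "entrywise_positive M" and y: "\<bar>y\<bar> < 1" and z: "\<bar>z\<bar> < 1"
  shows "\<bar>ln (mob_gamma M * y + mob_delta M) - ln (mob_gamma M * z + mob_delta M)\<bar> \<le> 1 * d_hyp y z"
proof -
  have p: "mA M > 0" "mB M > 0" "mC M > 0" "mD M > 0" using ep_pos[OF M] by auto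
  have pp: "mA M + mC M > 0" "mB M + mD M > 0" "(1::real) > 0" using p by auto
  have g: "\<bar>(ln ((mA M + mC M) * exp (2 * artanh y) + (mB M + mD M)) - ln (1 * exp (2 * artanh y) + 1)) -
      (ln ((mA M + mC M) * exp (2 * artanh z) + (mB M + mD M)) - ln (1 * exp (2 * artanh z) + 1))\<bar>
     \<le> \<bar>(mA M + mC M) * 1 - (mB M + mD M) * 1\<bar> / ((mA M + mC M) * 1 + (mB M + mD M) * 1) * \<bar>2 * artanh y - 2 * artanh z\<bar>"
    by (rule glip[OF pp(1,2,3,3)])
  have k: "\<bar>(mA M + mC M) * 1 - (mB M + mD M) * 1\<bar> / ((mA M + mC M) * 1 + (mB M + mD M) * 1) \<le> 1"
    using pp by (auto simp: divide_le_eq abs_le_iff)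
  have "\<bar>(mA M + mC M) * 1 - (mB M + mD M) * 1\<bar> / ((mA M + mC M) * 1 + (mB M + mD M) * 1) * \<bar>2 * artanh y - 2 * artanh z\<bar>
     \<le> 1 * \<bar>2 * artanh y - 2 * artanh z\<bar>"
    using k by (intro mult_right_mono) auto
  then show ?thesis using g unfolding dhyp_eq H_ell[OF M y] H_ell[OF M z] by linarith
qed

lemma ell_bound:
  assumes M: "entrywise_positive M" and x: "\<bar>x\<bar> \<le> 1"
  shows "\<bar>ln (mob_gamma M * x + mob_delta M)\<bar> \<le> \<bar>ln (mob_delta M - \<bar>mob_gamma M\<bar>)\<bar> + \<bar>ln (mob_delta M + \<bar>mob_gamma M\<bar>)\<bar>"
proof -
  have g: "\<bar>mob_gamma M\<bar> < mob_delta M" by (rule gamma_lt[OF M])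
  have lo: "mob_delta M - \<bar>mob_gamma M\<bar> \<le> mob_gamma M * x + mob_delta M"
    and hi: "mob_gamma M * x + mob_delta M \<le> mob_delta M + \<bar>mob_gamma M\<bar>"
  proof -
    have "\<bar>mob_gamma M * x\<bar> \<le> \<bar>mob_gamma M\<bar>" using x by (simp add: abs_mult mult_left_le)
    then show "mob_delta M - \<bar>mob_gamma M\<bar> \<le> mob_gamma M * x + mob_delta M"
      and "mob_gamma M * x + mob_delta M \<le> mob_delta M + \<bar>mob_gamma M\<bar>" by (auto simp: abs_le_iff)
  qed
  have pl: "mob_delta M - \<bar>mob_gamma M\<bar> > 0" using g by simp
  have "ln (mob_delta M - \<bar>mob_gamma M\<bar>) \<le> ln (mob_gamma M * x + mob_delta M)"
    using lo pl by simp
  moreover have "ln (mob_gamma M * x + mob_delta M) \<le> ln (mob_delta M + \<bar>mob_gamma M\<bar>)"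
    using hi pl lo by simp
  ultimately show ?thesis by linarith
qed

lemma mobf_meas: "mob_f M \<in> borel_measurable borel"
  unfolding mob_f_def[abs_def] by measurable

lemma ell_meas: "(\<lambda>x. ln (mob_gamma M * x + mob_delta M)) \<in> borel_measurable borel"
  by measurable




lemma I1_sets: "UNIV - I1 \<in> sets borel"
  by (intro sets.Diff) auto

lemma P1_facts:
  assumes P: "P1 \<mu>"
  shows "prob_space \<mu>" "sets \<mu> = sets borel" "AE x in \<mu>. x \<in> I1" "integrable \<mu> (\<lambda>x. d_hyp x 0)"
    "space \<mu> = UNIV"
proof -
  show ps: "prob_space \<mu>" and s: "sets \<mu> = sets borel" and "integrable \<mu> (\<lambda>x. d_hyp x 0)"
    using P unfolding P1_def by auto
  have e: "emeasure \<mu> (UNIV - I1) = 0" using P unfolding P1_def by auto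
  show "space \<mu> = UNIV" using sets_eq_imp_space_eq[OF s] by simp
  show "AE x in \<mu>. x \<in> I1"
    by (rule AE_I'[of "UNIV - I1"]) (use e s I1_sets in auto)
qed

lemma meas_borel: "sets \<mu> = sets borel \<Longrightarrow> g \<in> borel_measurable borel \<Longrightarrow> g \<in> borel_measurable \<mu>"
  using measurable_cong_sets[of \<mu> borel borel borel] by auto

lemma base_bound:
  fixes g :: "real \<Rightarrow> real"
  assumes P: "P1 \<mu>" and gm: "g \<in> borel_measurable borel" and gb: "\<forall>x\<in>I1. \<bar>g x\<bar> \<le> Bd"
    and lip: "\<forall>y\<in>I1. \<forall>z\<in>I1. \<bar>g y - g z\<bar> \<le> L * d_hyp y z"
  shows "integrable \<mu> g" "\<bar>g 0 - integral\<^sup>L \<mu> g\<bar> \<le> L * integral\<^sup>L \<mu> (\<lambda>x. d_hyp x 0)"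
proof -
  note PF = P1_facts[OF P]
  interpret prob_space \<mu> by (rule PF(1))
  have gm': "g \<in> borel_measurable \<mu>" by (rule meas_borel[OF PF(2) gm])
  show ig: "integrable \<mu> g"
    by (rule integrable_const_bound[of _ Bd]) (use PF(3) gb gm' in auto)
  have ic: "integrable \<mu> (\<lambda>x. g 0)" by simp
  have id: "integrable \<mu> (\<lambda>x. g 0 - g x)" using ig by simp
  have "g 0 - integral\<^sup>L \<mu> g = integral\<^sup>L \<mu> (\<lambda>x. g 0 - g x)"
    using ig by (simp add: prob_space)
  then have "\<bar>g 0 - integral\<^sup>L \<mu> g\<bar> \<le> integral\<^sup>L \<mu> (\<lambda>x. \<bar>g 0 - g x\<bar>)"
    using integral_abs_bound[of \<mu> "\<lambda>x. g 0 - g x"] by simp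
  also have "\<dots> \<le> integral\<^sup>L \<mu> (\<lambda>x. L * d_hyp x 0)"
  proof (rule integral_mono_AE)
    show "integrable \<mu> (\<lambda>x. \<bar>g 0 - g x\<bar>)" using id by simp
    show "integrable \<mu> (\<lambda>x. L * d_hyp x 0)" using PF(4) by simp
    show "AE x in \<mu>. \<bar>g 0 - g x\<bar> \<le> L * d_hyp x 0"
      using PF(3)
    proof eventually_elim
      case (elim x)
      have "(0::real) \<in> I1" by simp
      then have "\<bar>g 0 - g x\<bar> \<le> L * d_hyp 0 x" using lip elim by blast
      also have "d_hyp 0 x = d_hyp x 0" unfolding d_hyp_def by (simp add: abs_minus_commute)
      finally show ?case .
    qed
  qed
  also have "\<dots> = L * integral\<^sup>L \<mu> (\<lambda>x. d_hyp x 0)" by simp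
  finally show "\<bar>g 0 - integral\<^sup>L \<mu> g\<bar> \<le> L * integral\<^sup>L \<mu> (\<lambda>x. d_hyp x 0)" .
qed

lemma Eid_I1:
  fixes \<eta> :: "'r \<Rightarrow> real measure" and F :: "'r \<Rightarrow> real \<Rightarrow> real" and w :: "'r \<Rightarrow> real"
    and \<mu> :: "real measure" and g :: "real \<Rightarrow> real"
  assumes fin: "finite C" and wnn: "\<forall>r\<in>C. w r \<ge> 0" and w1: "(\<Sum>r\<in>C. w r) = 1"
    and eta: "\<forall>r\<in>C. P1 (\<eta> r)" and mu: "P1 \<mu>"
    and Fm: "\<forall>r\<in>C. F r \<in> borel_measurable borel"
    and FI: "\<forall>r\<in>C. \<forall>y\<in>I1. F r y \<in> I1"
    and mix: "\<forall>A\<in>sets borel. measure \<mu> A = (\<Sum>r\<in>C. w r * measure (\<eta> r) (F r -` A))"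
    and gm: "g \<in> borel_measurable borel" and gb: "\<forall>x\<in>I1. \<bar>g x\<bar> \<le> Bd"
  shows "integral\<^sup>L \<mu> g = (\<Sum>r\<in>C. w r * integral\<^sup>L (\<eta> r) (\<lambda>x. g (F r x)))"
proof -
  define h where "h x = indicator I1 x * g x" for x
  have hm: "h \<in> borel_measurable borel" unfolding h_def using gm by measurable
  have hb: "\<forall>x. \<bar>h x\<bar> \<le> max Bd 0"
  proof
    fix x show "\<bar>h x\<bar> \<le> max Bd 0"
    proof (cases "x \<in> I1")
      case True then have "\<bar>g x\<bar> \<le> Bd" using gb by blast
      then show ?thesis using True unfolding h_def by simp
    qed (simp add: h_def)
  qed
  note MF = P1_facts[OF mu]
  have "integral\<^sup>L \<mu> h = (\<Sum>r\<in>C. w r * integral\<^sup>L (\<eta> r) (\<lambda>x. h (F r x)))"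
  proof (rule mix_integral[OF fin wnn w1 _ MF(1,2) Fm mix hm hb])
    show "\<forall>r\<in>C. prob_space (\<eta> r) \<and> sets (\<eta> r) = sets borel" using eta P1_facts by blast
  qed
  moreover have "integral\<^sup>L \<mu> g = integral\<^sup>L \<mu> h"
  proof (rule integral_cong_AE)
    show "g \<in> borel_measurable \<mu>" "h \<in> borel_measurable \<mu>" using meas_borel[OF MF(2)] gm hm by auto
    show "AE x in \<mu>. g x = h x" using MF(3) by eventually_elim (simp add: h_def)
  qed
  moreover have "integral\<^sup>L (\<eta> r) (\<lambda>x. h (F r x)) = integral\<^sup>L (\<eta> r) (\<lambda>x. g (F r x))" if r: "r \<in> C" for r
  proof (rule integral_cong_AE)
    note EF = P1_facts[of "\<eta> r"]
    have P: "P1 (\<eta> r)" using eta r by blast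
    have Fr: "F r \<in> borel_measurable borel" using Fm r by blast
    show "(\<lambda>x. h (F r x)) \<in> borel_measurable (\<eta> r)" "(\<lambda>x. g (F r x)) \<in> borel_measurable (\<eta> r)"
      using meas_borel[OF EF(2)[OF P]] measurable_compose[OF Fr hm] measurable_compose[OF Fr gm] by auto
    show "AE x in \<eta> r. h (F r x) = g (F r x)" using EF(3)[OF P]
      by eventually_elim (use FI r in \<open>auto simp: h_def\<close>)
  qed
  ultimately show ?thesis by simp
qed




lemma conv_bound:
  fixes \<eta> :: "'r \<Rightarrow> real measure" and F :: "'r \<Rightarrow> real \<Rightarrow> real" and w :: "'r \<Rightarrow> 'r \<Rightarrow> real"
  assumes fin: "finite C" and wnn: "\<forall>r\<in>C. \<forall>s\<in>C. w r s \<ge> 0" and w1: "\<forall>s\<in>C. (\<Sum>r\<in>C. w r s) = 1"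
    and eta: "\<forall>r\<in>C. P1 (\<eta> r)"
    and Fm: "\<forall>r\<in>C. F r \<in> borel_measurable borel"
    and FI: "\<forall>r\<in>C. \<forall>y\<in>I1. F r y \<in> I1"
    and contr: "\<forall>r\<in>C. \<forall>y\<in>I1. \<forall>z\<in>I1. d_hyp (F r y) (F r z) \<le> \<kappa> * d_hyp y z"
    and kp: "0 \<le> \<kappa>"
    and mix: "\<forall>s\<in>C. \<forall>A\<in>sets borel. measure (\<eta> s) A = (\<Sum>r\<in>C. w r s * measure (\<eta> r) (F r -` A))"
  defines "K0 \<equiv> (\<Sum>r\<in>C. integral\<^sup>L (\<eta> r) (\<lambda>x. d_hyp x 0))"
  shows "\<forall>s\<in>C. \<forall>g L Bd. (g \<in> borel_measurable borel \<and> (\<forall>x\<in>I1. \<bar>g x\<bar> \<le> Bd) \<and> 0 \<le> L \<and>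
      (\<forall>y\<in>I1. \<forall>z\<in>I1. \<bar>g y - g z\<bar> \<le> L * d_hyp y z)) \<longrightarrow>
      \<bar>Phi C w F n s g - integral\<^sup>L (\<eta> s) g\<bar> \<le> L * \<kappa> ^ n * K0"
proof (induction n)
  case 0
  show ?case
  proof (intro ballI allI impI)
    fix s g L Bd
    assume s: "s \<in> C" and H: "g \<in> borel_measurable borel \<and> (\<forall>x\<in>I1. \<bar>g x\<bar> \<le> Bd) \<and> 0 \<le> L \<and>
      (\<forall>y\<in>I1. \<forall>z\<in>I1. \<bar>g y - g z\<bar> \<le> L * d_hyp y z)"
    have P: "P1 (\<eta> s)" using eta s by blast
    have gm: "g \<in> borel_measurable borel" and gb: "\<forall>x\<in>I1. \<bar>g x\<bar> \<le> Bd"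
      and lip: "\<forall>y\<in>I1. \<forall>z\<in>I1. \<bar>g y - g z\<bar> \<le> L * d_hyp y z" using H by auto
    have "\<bar>g 0 - integral\<^sup>L (\<eta> s) g\<bar> \<le> L * integral\<^sup>L (\<eta> s) (\<lambda>x. d_hyp x 0)"
      by (rule base_bound(2)[OF P gm gb lip])
    also have "\<dots> \<le> L * K0"
    proof (rule mult_left_mono)
      show "0 \<le> L" using H by blast
      show "integral\<^sup>L (\<eta> s) (\<lambda>x. d_hyp x 0) \<le> K0"
        unfolding K0_def using fin s
        by (intro member_le_sum integral_nonneg) (auto simp: d_hyp_def)
    qed
    finally show "\<bar>Phi C w F 0 s g - integral\<^sup>L (\<eta> s) g\<bar> \<le> L * \<kappa> ^ 0 * K0" by simp
  qed
next
  case (Suc n)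
  show ?case
  proof (intro ballI allI impI)
    fix s g L Bd
    assume s: "s \<in> C" and H: "g \<in> borel_measurable borel \<and> (\<forall>x\<in>I1. \<bar>g x\<bar> \<le> Bd) \<and> 0 \<le> L \<and>
      (\<forall>y\<in>I1. \<forall>z\<in>I1. \<bar>g y - g z\<bar> \<le> L * d_hyp y z)"
    have gm: "g \<in> borel_measurable borel" and gb: "\<forall>x\<in>I1. \<bar>g x\<bar> \<le> Bd" and L: "0 \<le> L"
      and lip: "\<forall>y\<in>I1. \<forall>z\<in>I1. \<bar>g y - g z\<bar> \<le> L * d_hyp y z" using H by auto
    have E: "integral\<^sup>L (\<eta> s) g = (\<Sum>r\<in>C. w r s * integral\<^sup>L (\<eta> r) (\<lambda>x. g (F r x)))"
    proof (rule Eid_I1[OF fin _ _ eta _ Fm FI _ gm gb])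
      show "\<forall>r\<in>C. 0 \<le> w r s" using wnn s by blast
      show "(\<Sum>r\<in>C. w r s) = 1" using w1 s by blast
      show "P1 (\<eta> s)" using eta s by blast
      show "\<forall>A\<in>sets borel. measure (\<eta> s) A = (\<Sum>r\<in>C. w r s * measure (\<eta> r) (F r -` A))" using mix s by blast
    qed
    have IH: "\<bar>Phi C w F n r (\<lambda>y. g (F r y)) - integral\<^sup>L (\<eta> r) (\<lambda>y. g (F r y))\<bar> \<le> (L * \<kappa>) * \<kappa> ^ n * K0"
      if r: "r \<in> C" for r
    proof -
      have Fr: "F r \<in> borel_measurable borel" using Fm r by blast
      have "(\<lambda>y. g (F r y)) \<in> borel_measurable borel" by (rule measurable_compose[OF Fr gm])
      moreover have "\<forall>x\<in>I1. \<bar>g (F r x)\<bar> \<le> Bd" using gb FI r by blast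
      moreover have "0 \<le> L * \<kappa>" using L kp by simp
      moreover have "\<forall>y\<in>I1. \<forall>z\<in>I1. \<bar>g (F r y) - g (F r z)\<bar> \<le> (L * \<kappa>) * d_hyp y z"
      proof (intro ballI)
        fix y z assume y: "y \<in> I1" and z: "z \<in> I1"
        have "\<bar>g (F r y) - g (F r z)\<bar> \<le> L * d_hyp (F r y) (F r z)" using lip FI r y z by blast
        also have "\<dots> \<le> L * (\<kappa> * d_hyp y z)" using contr r y z L by (intro mult_left_mono) auto
        finally show "\<bar>g (F r y) - g (F r z)\<bar> \<le> (L * \<kappa>) * d_hyp y z" by (simp add: mult_ac)
      qed
      ultimately have cj: "(\<lambda>y. g (F r y)) \<in> borel_measurable borel \<and> (\<forall>x\<in>I1. \<bar>g (F r x)\<bar> \<le> Bd) \<and> 0 \<le> L * \<kappa> \<and>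
          (\<forall>y\<in>I1. \<forall>z\<in>I1. \<bar>g (F r y) - g (F r z)\<bar> \<le> (L * \<kappa>) * d_hyp y z)" by (intro conjI)
      show ?thesis by (rule Suc.IH[rule_format, OF r cj])
    qed
    have "Phi C w F (Suc n) s g - integral\<^sup>L (\<eta> s) g =
        (\<Sum>r\<in>C. w r s * (Phi C w F n r (\<lambda>y. g (F r y)) - integral\<^sup>L (\<eta> r) (\<lambda>y. g (F r y))))"
      unfolding E by (simp add: sum_subtractf right_diff_distrib)
    also have "\<bar>\<dots>\<bar> \<le> (\<Sum>r\<in>C. \<bar>w r s * (Phi C w F n r (\<lambda>y. g (F r y)) - integral\<^sup>L (\<eta> r) (\<lambda>y. g (F r y)))\<bar>)"
      by (rule sum_abs)
    also have "\<dots> \<le> (\<Sum>r\<in>C. w r s * ((L * \<kappa>) * \<kappa> ^ n * K0))"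
    proof (rule sum_mono)
      fix r assume r: "r \<in> C"
      have w: "w r s \<ge> 0" using wnn r s by blast
      show "\<bar>w r s * (Phi C w F n r (\<lambda>y. g (F r y)) - integral\<^sup>L (\<eta> r) (\<lambda>y. g (F r y)))\<bar> \<le> w r s * ((L * \<kappa>) * \<kappa> ^ n * K0)"
        unfolding abs_mult using w IH[OF r] by (simp add: mult_left_mono)
    qed
    also have "\<dots> = (\<Sum>r\<in>C. w r s) * ((L * \<kappa>) * \<kappa> ^ n * K0)" by (simp add: sum_distrib_right)
    also have "\<dots> = L * \<kappa> ^ Suc n * K0" using w1 s by (simp add: mult_ac)
    finally show "\<bar>Phi C w F (Suc n) s g - integral\<^sup>L (\<eta> s) g\<bar> \<le> L * \<kappa> ^ Suc n * K0" .
  qed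
qed

lemma conv_lim:
  fixes \<eta> :: "'r \<Rightarrow> real measure" and F :: "'r \<Rightarrow> real \<Rightarrow> real" and w :: "'r \<Rightarrow> 'r \<Rightarrow> real"
  assumes fin: "finite C" and wnn: "\<forall>r\<in>C. \<forall>s\<in>C. w r s \<ge> 0" and w1: "\<forall>s\<in>C. (\<Sum>r\<in>C. w r s) = 1"
    and eta: "\<forall>r\<in>C. P1 (\<eta> r)"
    and Fm: "\<forall>r\<in>C. F r \<in> borel_measurable borel"
    and FI: "\<forall>r\<in>C. \<forall>y\<in>I1. F r y \<in> I1"
    and contr: "\<forall>r\<in>C. \<forall>y\<in>I1. \<forall>z\<in>I1. d_hyp (F r y) (F r z) \<le> \<kappa> * d_hyp y z"
    and kp: "0 \<le> \<kappa>" "\<kappa> < 1"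
    and mix: "\<forall>s\<in>C. \<forall>A\<in>sets borel. measure (\<eta> s) A = (\<Sum>r\<in>C. w r s * measure (\<eta> r) (F r -` A))"
    and s: "s \<in> C"
    and gm: "g \<in> borel_measurable borel" and gb: "\<forall>x\<in>I1. \<bar>g x\<bar> \<le> Bd" and L: "0 \<le> L"
    and lip: "\<forall>y\<in>I1. \<forall>z\<in>I1. \<bar>g y - g z\<bar> \<le> L * d_hyp y z"
  shows "(\<lambda>n. Phi C w F n s g) \<longlonglongrightarrow> integral\<^sup>L (\<eta> s) g"
proof -
  define K0 where "K0 = (\<Sum>r\<in>C. integral\<^sup>L (\<eta> r) (\<lambda>x. d_hyp x 0))"
  have b: "\<bar>Phi C w F n s g - integral\<^sup>L (\<eta> s) g\<bar> \<le> L * \<kappa> ^ n * K0" for n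
  proof -
    have cj: "g \<in> borel_measurable borel \<and> (\<forall>x\<in>I1. \<bar>g x\<bar> \<le> Bd) \<and> 0 \<le> L \<and>
      (\<forall>y\<in>I1. \<forall>z\<in>I1. \<bar>g y - g z\<bar> \<le> L * d_hyp y z)" using gm gb L lip by (intro conjI)
    show ?thesis unfolding K0_def by (rule conv_bound[OF fin wnn w1 eta Fm FI contr kp(1) mix, of n, rule_format, OF s cj])
  qed
  have k0: "(\<lambda>n. \<kappa> ^ n) \<longlonglongrightarrow> 0" by (rule LIMSEQ_power_zero) (use kp in simp)
  have "(\<lambda>n. L * \<kappa> ^ n * K0) \<longlonglongrightarrow> L * 0 * K0"
    by (rule tendsto_mult[OF tendsto_mult[OF tendsto_const k0] tendsto_const])
  then have t0: "(\<lambda>n. L * \<kappa> ^ n * K0) \<longlonglongrightarrow> 0" by simp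
  have ev: "\<forall>\<^sub>F n in sequentially. norm (Phi C w F n s g - integral\<^sup>L (\<eta> s) g) \<le> L * \<kappa> ^ n * K0"
    using b by (simp add: always_eventually)
  have "(\<lambda>n. Phi C w F n s g - integral\<^sup>L (\<eta> s) g) \<longlonglongrightarrow> 0"
    by (rule Lim_null_comparison[OF ev t0])
  then show ?thesis by (rule LIM_zero_cancel)
qed




lemma norm1_all:
  "norm1 (M *v psi x) = \<bar>mA M * ((1 + x) / 2) + mB M * ((1 - x) / 2)\<bar> + \<bar>mC M * ((1 + x) / 2) + mD M * ((1 - x) / 2)\<bar>"
  unfolding norm1_def psi_def matrix_vector_mult_def by (simp add: sum_2 mA_def mB_def mC_def mD_def)

lemma norm1_meas: "(\<lambda>x. ln (norm1 (M *v psi x))) \<in> borel_measurable borel"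
  unfolding norm1_all by measurable

theorem proposition3p12:
  fixes C :: "'r set" and Q :: "'r \<Rightarrow> 'r \<Rightarrow> real" and \<pi> :: "'r \<Rightarrow> real"
    and B :: "'r \<Rightarrow> real^2^2" and \<eta> :: "'r \<Rightarrow> real measure"
  assumes Q: "stoch_irred_aperiodic C Q"
    and pi: "stationary C Q \<pi>"
    and Bpos: "\<forall>r\<in>C. entrywise_positive (B r)"
    and eta_P1: "\<forall>r\<in>C. P1 (\<eta> r)"
    and eta_fix: "H_fixed C \<pi> Q B \<eta>"
  shows "(\<lambda>n. bracket0 C \<pi> ((Tsys C \<pi> Q B ^^ n) (vseed C \<pi> Q B)))
           sums complex_of_real
             (\<Sum>r\<in>C. \<pi> r * (\<integral>x. ln (norm1 (B r *v psi x)) \<partial>\<eta> r))"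
proof -
  have fin: "finite C" and Cne: "C \<noteq> {}" and Qnn: "\<forall>r\<in>C. \<forall>r'\<in>C. Q r r' \<ge> 0"
    and Qrow: "\<forall>r\<in>C. (\<Sum>r'\<in>C. Q r r') = 1"
    using Q unfolding stoch_irred_aperiodic_def by auto
  have pinn: "\<forall>r\<in>C. \<pi> r \<ge> 0" and pistat: "\<forall>s\<in>C. (\<Sum>r\<in>C. \<pi> r * Q r s) = \<pi> s"
    using pi unfolding stationary_def by auto
  have pipos: "\<pi> s > 0" if "s \<in> C" for s using pi_pos[OF Q pi that] .
  define p where "p = (\<lambda>r s. \<pi> r * Q r s / \<pi> s)"
  define F where "F = (\<lambda>r. mob_f (B r))"
  have ps: "\<forall>s\<in>C. (\<Sum>r\<in>C. \<pi> r * Q r s / \<pi> s) = 1"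
  proof
    fix s assume s: "s \<in> C"
    have "(\<Sum>r\<in>C. \<pi> r * Q r s / \<pi> s) = (\<Sum>r\<in>C. \<pi> r * Q r s) / \<pi> s"
      by (simp add: sum_divide_distrib)
    also have "\<dots> = 1" using pistat s pipos[OF s] by simp
    finally show "(\<Sum>r\<in>C. \<pi> r * Q r s / \<pi> s) = 1" .
  qed
  have ps': "\<forall>s\<in>C. (\<Sum>r\<in>C. p r s) = 1" using ps unfolding p_def by simp
  have pnn: "\<forall>r\<in>C. \<forall>s\<in>C. p r s \<ge> 0"
  proof (intro ballI)
    fix r s assume r: "r \<in> C" and s: "s \<in> C"
    have "\<pi> r * Q r s \<ge> 0" using pinn Qnn r s by simp
    then show "p r s \<ge> 0" unfolding p_def using pipos[OF s] by simp
  qed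
  have FI: "\<forall>r\<in>C. \<forall>y\<in>I1. F r y \<in> I1" unfolding F_def by (rule mobF_I1[OF Bpos])
  define lR where "lR r x = ln (mob_gamma (B r) * x + mob_delta (B r))" for r x
  define X where "X n = (\<Sum>r\<in>C. \<pi> r * Phi C p F n r (lR r))" for n
  define Lim where "Lim = (\<Sum>r\<in>C. \<pi> r * integral\<^sup>L (\<eta> r) (lR r))"
  define Y where "Y n = X n - (if n = 0 then 0 else X (n - 1))" for n

  have PhiL: "Phi C p F m r (mob_ell (B r)) = complex_of_real (Phi C p F m r (lR r))" if r: "r \<in> C" for m r
  proof -
    have "Phi C p F m r (mob_ell (B r)) = Phi C p F m r (\<lambda>y. complex_of_real (lR r y))"
      by (rule Phi_cong[OF FI]) (use Bpos r in \<open>auto simp: lR_def intro!: ell_real\<close>)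
    also have "\<dots> = complex_of_real (Phi C p F m r (lR r))" by (rule Phi_of_real)
    finally show ?thesis .
  qed
  have TF: "\<forall>s\<in>C. (Tsys C \<pi> Q B ^^ n) (vseed C \<pi> Q B) s =
      (\<lambda>k. Phi C p F (Suc n) s (\<lambda>y. vvec y 0 k) - Phi C p F n s (\<lambda>y. vvec y 0 k) +
        (\<Sum>r\<in>C. p r s *\<^sub>R (Phi C p F n r (mob_ell (B r)) -
                 (if n = 0 then 0 else Phi C p F (n - 1) r (mob_ell (B r))))) * e0 k)" for n
    using Tn_formula[OF Bpos ps, of n] unfolding p_def F_def by simp
  have br: "bracket0 C \<pi> ((Tsys C \<pi> Q B ^^ n) (vseed C \<pi> Q B)) = complex_of_real (Y n)" for n
  proof -
    define DR where "DR r = Phi C p F n r (lR r) - (if n = 0 then 0 else Phi C p F (n - 1) r (lR r))" for r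
    have s0: "(Tsys C \<pi> Q B ^^ n) (vseed C \<pi> Q B) s 0 = complex_of_real (\<Sum>r\<in>C. p r s * DR r)"
      if s: "s \<in> C" for s
    proof -
      have z: "(\<lambda>y. vvec y 0 0) = (\<lambda>y. 0)" by (simp add: vvec_k0)
      have "(Tsys C \<pi> Q B ^^ n) (vseed C \<pi> Q B) s 0 =
          (\<Sum>r\<in>C. p r s *\<^sub>R (Phi C p F n r (mob_ell (B r)) -
                 (if n = 0 then 0 else Phi C p F (n - 1) r (mob_ell (B r)))))"
        using TF[of n] s by (simp add: z Phi_zero e0_def del: Phi.simps)
      also have "\<dots> = (\<Sum>r\<in>C. p r s *\<^sub>R complex_of_real (DR r))"
        by (rule sum.cong[OF refl]) (simp add: PhiL DR_def del: Phi.simps)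
      also have "\<dots> = complex_of_real (\<Sum>r\<in>C. p r s * DR r)"
        by (simp add: scaleR_conv_of_real)
      finally show ?thesis .
    qed
    have "bracket0 C \<pi> ((Tsys C \<pi> Q B ^^ n) (vseed C \<pi> Q B)) =
        (\<Sum>s\<in>C. complex_of_real (\<pi> s) * complex_of_real (\<Sum>r\<in>C. p r s * DR r))"
      unfolding bracket0_def by (rule sum.cong[OF refl]) (simp add: s0)
    also have "\<dots> = complex_of_real (\<Sum>s\<in>C. \<pi> s * (\<Sum>r\<in>C. p r s * DR r))" by simp
    also have "(\<Sum>s\<in>C. \<pi> s * (\<Sum>r\<in>C. p r s * DR r)) = (\<Sum>r\<in>C. (\<Sum>s\<in>C. \<pi> s * p r s) * DR r)"
    proof -
      have "(\<Sum>s\<in>C. \<pi> s * (\<Sum>r\<in>C. p r s * DR r)) = (\<Sum>s\<in>C. \<Sum>r\<in>C. \<pi> s * p r s * DR r)"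
        by (simp only: sum_distrib_left mult.assoc)
      also have "\<dots> = (\<Sum>r\<in>C. \<Sum>s\<in>C. \<pi> s * p r s * DR r)" by (rule sum.swap)
      also have "\<dots> = (\<Sum>r\<in>C. (\<Sum>s\<in>C. \<pi> s * p r s) * DR r)" by (simp only: sum_distrib_right)
      finally show ?thesis .
    qed
    also have "\<dots> = (\<Sum>r\<in>C. \<pi> r * DR r)"
    proof (rule sum.cong[OF refl])
      fix r assume r: "r \<in> C"
      have "(\<Sum>s\<in>C. \<pi> s * p r s) = (\<Sum>s\<in>C. \<pi> r * Q r s)"
      proof (rule sum.cong[OF refl])
        fix s assume "s \<in> C"
        then have "\<pi> s \<noteq> 0" using pipos by force
        then show "\<pi> s * p r s = \<pi> r * Q r s" by (simp add: p_def)
      qed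
      also have "\<dots> = \<pi> r" using Qrow r by (simp add: sum_distrib_left[symmetric])
      finally show "(\<Sum>s\<in>C. \<pi> s * p r s) * DR r = \<pi> r * DR r" by simp
    qed
    also have "\<dots> = (\<Sum>r\<in>C. \<pi> r * Phi C p F n r (lR r)) - (\<Sum>r\<in>C. \<pi> r * (if n = 0 then 0 else Phi C p F (n - 1) r (lR r)))"
      unfolding DR_def by (simp only: right_diff_distrib sum_subtractf)
    also have "\<dots> = Y n" unfolding Y_def X_def
    proof (cases n)
      case 0 then show "(\<Sum>r\<in>C. \<pi> r * Phi C p F n r (lR r)) - (\<Sum>r\<in>C. \<pi> r * (if n = 0 then 0 else Phi C p F (n - 1) r (lR r))) =
        (\<Sum>r\<in>C. \<pi> r * Phi C p F n r (lR r)) - (if n = 0 then 0 else \<Sum>r\<in>C. \<pi> r * Phi C p F (n - 1) r (lR r))"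
        by (simp only: if_True sum.neutral mult_zero_right) simp
    next
      case (Suc m) then show "(\<Sum>r\<in>C. \<pi> r * Phi C p F n r (lR r)) - (\<Sum>r\<in>C. \<pi> r * (if n = 0 then 0 else Phi C p F (n - 1) r (lR r))) =
        (\<Sum>r\<in>C. \<pi> r * Phi C p F n r (lR r)) - (if n = 0 then 0 else \<Sum>r\<in>C. \<pi> r * Phi C p F (n - 1) r (lR r))"
        by (simp only: Suc_not_Zero if_False)
    qed
    finally show ?thesis .
  qed

  define \<kappa> where "\<kappa> = Max ((\<lambda>r. kap (B r)) ` C)"
  have kmax: "kap (B r) \<le> \<kappa>" if "r \<in> C" for r unfolding \<kappa>_def using fin that by simp
  have k01: "0 \<le> \<kappa> \<and> \<kappa> < 1"
  proof -
    have "\<kappa> \<in> (\<lambda>r. kap (B r)) ` C" unfolding \<kappa>_def using fin Cne by (intro Max_in) auto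
    then obtain r where r: "r \<in> C" "\<kappa> = kap (B r)" by auto
    then show ?thesis using kap_lt[of "B r"] Bpos by auto
  qed
  have contr: "\<forall>r\<in>C. \<forall>y\<in>I1. \<forall>z\<in>I1. d_hyp (F r y) (F r z) \<le> \<kappa> * d_hyp y z"
  proof (intro ballI)
    fix r y z assume r: "r \<in> C" and y: "y \<in> I1" and z: "z \<in> I1"
    have "d_hyp (F r y) (F r z) \<le> kap (B r) * d_hyp y z"
      unfolding F_def using Bpos r y z by (intro f_contr) (auto simp: abs_less_iff)
    also have "\<dots> \<le> \<kappa> * d_hyp y z" using kmax[OF r] by (intro mult_right_mono) (auto simp: d_hyp_def)
    finally show "d_hyp (F r y) (F r z) \<le> \<kappa> * d_hyp y z" .
  qed
  have Fm: "\<forall>r\<in>C. F r \<in> borel_measurable borel" unfolding F_def using mobf_meas by blast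
  have mix: "\<forall>s\<in>C. \<forall>A\<in>sets borel. measure (\<eta> s) A = (\<Sum>r\<in>C. p r s * measure (\<eta> r) (F r -` A))"
    using eta_fix unfolding H_fixed_def p_def F_def by simp
  have limr: "(\<lambda>n. Phi C p F n r (lR r)) \<longlonglongrightarrow> integral\<^sup>L (\<eta> r) (lR r)" if r: "r \<in> C" for r
  proof (rule conv_lim[OF fin pnn ps' eta_P1 Fm FI contr _ _ mix r])
    have M: "entrywise_positive (B r)" using Bpos r by blast
    show "0 \<le> \<kappa>" "\<kappa> < 1" using k01 by auto
    show "lR r \<in> borel_measurable borel" unfolding lR_def[abs_def] by (rule ell_meas)
    show "\<forall>x\<in>I1. \<bar>lR r x\<bar> \<le> \<bar>ln (mob_delta (B r) - \<bar>mob_gamma (B r)\<bar>)\<bar> + \<bar>ln (mob_delta (B r) + \<bar>mob_gamma (B r)\<bar>)\<bar>"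
      unfolding lR_def using ell_bound[OF M] by (auto simp: abs_le_iff)
    show "0 \<le> (1::real)" by simp
    show "\<forall>y\<in>I1. \<forall>z\<in>I1. \<bar>lR r y - lR r z\<bar> \<le> 1 * d_hyp y z"
      unfolding lR_def using ell_lip[OF M] by (auto simp: abs_less_iff)
  qed
  have XL: "X \<longlonglongrightarrow> Lim"
    unfolding X_def[abs_def] Lim_def by (intro tendsto_sum tendsto_mult_left limr)
  have YS: "Y sums Lim"
  proof -
    have "(\<lambda>n. X (Suc n) - X n) sums (Lim - X 0)" by (rule telescope_sums[OF XL])
    moreover have "(\<lambda>n. Y (Suc n)) = (\<lambda>n. X (Suc n) - X n)" unfolding Y_def by simp
    ultimately have "(\<lambda>n. Y (Suc n)) sums (Lim - X 0)" by simp
    then have "Y sums (Lim - X 0 + Y 0)" by (simp add: sums_Suc_iff)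
    then show ?thesis unfolding Y_def by simp
  qed

  have RHS: "(\<Sum>r\<in>C. \<pi> r * (\<integral>x. ln (norm1 (B r *v psi x)) \<partial>\<eta> r)) = Lim"
    unfolding Lim_def
  proof (rule sum.cong[OF refl])
    fix r assume r: "r \<in> C"
    have M: "entrywise_positive (B r)" using Bpos r by blast
    have P: "P1 (\<eta> r)" using eta_P1 r by blast
    note EF = P1_facts[OF P]
    have "(\<integral>x. ln (norm1 (B r *v psi x)) \<partial>\<eta> r) = integral\<^sup>L (\<eta> r) (lR r)"
    proof (rule integral_cong_AE)
      show "(\<lambda>x. ln (norm1 (B r *v psi x))) \<in> borel_measurable (\<eta> r)"
        by (rule meas_borel[OF EF(2) norm1_meas])
      show "lR r \<in> borel_measurable (\<eta> r)"
        unfolding lR_def[abs_def] by (rule meas_borel[OF EF(2) ell_meas])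
      show "AE x in \<eta> r. ln (norm1 (B r *v psi x)) = lR r x"
        using EF(3)
      proof eventually_elim
        case (elim x)
        then have "\<bar>x\<bar> \<le> 1" by auto
        then show ?case using norm1_psi[OF M] by (simp add: lR_def)
      qed
    qed
    then show "\<pi> r * (\<integral>x. ln (norm1 (B r *v psi x)) \<partial>\<eta> r) = \<pi> r * integral\<^sup>L (\<eta> r) (lR r)" by simp
  qed
  show ?thesis unfolding br RHS by (rule sums_of_real[OF YS])
qed



end
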